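(* Let $X_1, X_2, \ldots$ be independent random variables taking values in $[0,1]$, and assume there exists $\mu_0 \in [0,1]$ such that $\mathbb{E}[X_t] = \mu_0$ for all $t$. For $\delta > 0$ let $$\beta(n,\delta) = 2\,\mathcal{T}\!\left(\frac{\ln(3n\sqrt{n}/\delta)}{2}\right) + 6\ln(1+\ln(n)),$$ and let $\hat\tau_\delta$ be the Bernoulli GLR change-point detector with threshold $\beta$: $$\hat\tau_{\delta} := \inf \left\{ n \in \mathbb{N}^* : \sup_{1 \le s < n} \left[s \, \mathrm{kl}\left(\hat{\mu}_{1:s},\hat{\mu}_{1:n}\right) + (n-s)\, \mathrm{kl}\left(\hat{\mu}_{s+1:n},\hat{\mu}_{1:n}\right)\right] \geq \beta(n,\delta)\right\}.$$ Then $\mathbb{P}(\hat\tau_\delta < \infty) \leq \delta$.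
   Context: For $k \le k'$, $\hat\mu_{k:k'} = \frac{1}{k'-k+1}\sum_{j=k}^{k'} X_j$. The binary relative entropy is $\mathrm{kl}(x,y) = x\ln(x/y) + (1-x)\ln((1-x)/(1-y))$ (with the usual conventions $0\ln 0 = 0$). For $u \ge 1$ let $h(u) = u - \ln(u)$ and let $h^{-1}$ be its inverse (on $[1,\infty)$). For $x \ge 0$ let $\tilde h(x) = e^{1/h^{-1}(x)} h^{-1}(x)$ if $x \ge h^{-1}(1/\ln(3/2))$ and $\tilde h(x) = \frac{3}{2}(x - \ln(\ln(3/2)))$ otherwise. Define $\mathcal{T}(x) = 2\tilde h\left(\frac{h^{-1}(1+x) + \ln(2\zeta(2))}{2}\right)$, where $\zeta(2) = \pi^2/6$. The infimum of the empty set is $+\infty$. *)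

theory Defs
  imports "HOL-Probability.Probability"
begin

definition emp_mean :: "(nat \<Rightarrow> 'a \<Rightarrow> real) \<Rightarrow> nat \<Rightarrow> nat \<Rightarrow> 'a \<Rightarrow> real" where
  "emp_mean X k k' \<omega> = (\<Sum>j = k..k'. X j \<omega>) / (real k' - real k + 1)"

text \<open>Binary relative entropy with the convention 0 ln 0 = 0.\<close>
definition kl :: "real \<Rightarrow> real \<Rightarrow> real" where
  "kl x y = (if x = 0 then 0 else x * ln (x / y))
          + (if x = 1 then 0 else (1 - x) * ln ((1 - x) / (1 - y)))"

definition h_fun :: "real \<Rightarrow> real" where
  "h_fun u = u - ln u"

definition h_inv :: "real \<Rightarrow> real" where
  "h_inv x = (THE u. u \<ge> 1 \<and> h_fun u = x)"

definition h_tilde :: "real \<Rightarrow> real" where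
  "h_tilde x = (if x \<ge> h_inv (1 / ln (3/2)) then exp (1 / h_inv x) * h_inv x
                else 3/2 * (x - ln (ln (3/2))))"

definition calT :: "real \<Rightarrow> real" where
  "calT x = 2 * h_tilde ((h_inv (1 + x) + ln (2 * (pi^2 / 6))) / 2)"

definition beta_thr :: "nat \<Rightarrow> real \<Rightarrow> real" where
  "beta_thr n \<delta> = 2 * calT (ln (3 * real n * sqrt (real n) / \<delta>) / 2) + 6 * ln (1 + ln (real n))"

text \<open>GLR statistic: sup over 1 \<le> s < n (a finite set; for n = 1 the set is empty).\<close>
definition glr_stat :: "(nat \<Rightarrow> 'a \<Rightarrow> real) \<Rightarrow> nat \<Rightarrow> 'a \<Rightarrow> real" where
  "glr_stat X n \<omega> = Max ((\<lambda>s. real s * kl (emp_mean X 1 s \<omega>) (emp_mean X 1 n \<omega>)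
        + real (n - s) * kl (emp_mean X (s+1) n \<omega>) (emp_mean X 1 n \<omega>)) ` {1..<n})"

text \<open>GLR change-point detector; the infimum of the empty set is \<infinity>.
  The supremum over the empty set (n = 1) is -\<infinity>, so n = 1 never triggers.\<close>
definition glr_tau :: "(nat \<Rightarrow> 'a \<Rightarrow> real) \<Rightarrow> real \<Rightarrow> 'a \<Rightarrow> enat" where
  "glr_tau X \<delta> \<omega> = (INF n \<in> {n. n \<ge> 2 \<and> glr_stat X n \<omega> \<ge> beta_thr n \<delta>}. enat n)"

end

theory Submission
  imports Defs "HOL-Real_Asymp.Real_Asymp"
begin

lemma ln_lt_minus1: assumes "t > 1" shows "ln (t::real) < t - 1"
proof -
  have st: "sqrt t > 1" using assms by simp
  have "ln t = 2 * ln (sqrt t)" using assms by (simp add: ln_sqrt)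
  also have "\<dots> \<le> 2 * (sqrt t - 1)" using ln_le_minus_one[of "sqrt t"] st by simp
  also have "\<dots> < t - 1"
  proof -
    have "(sqrt t - 1)^2 > 0" using st by simp
    hence "(sqrt t)^2 - 2 * sqrt t + 1 > 0" by (simp add: power2_eq_square algebra_simps)
    thus ?thesis using assms by simp
  qed
  finally show ?thesis .
qed

lemma h_strict: assumes "1 \<le> u" "u < v" shows "u - ln u < v - ln (v::real)"
proof -
  have "ln v - ln u = ln (v/u)" using assms by (simp add: ln_div)
  also have "\<dots> < v/u - 1" using assms by (intro ln_lt_minus1) simp
  also have "\<dots> = (v-u)/u" using assms by (simp add: field_simps)
  also have "\<dots> \<le> v - u" using assms by (simp add: divide_le_eq)
  finally show ?thesis by simp
qed

lemma h_exists: assumes "x \<ge> 1" shows "\<exists>u\<ge>1. h_fun u = (x::real)"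
proof -
  have c: "continuous_on {1..2*x} h_fun" unfolding h_fun_def
    by (intro continuous_intros) auto
  have "ln (2*x) \<le> x"
  proof -
    have "ln (2*x) = ln 2 + ln x" using assms by (simp add: ln_mult)
    also have "\<dots> \<le> 1 + (x - 1)" using ln_le_minus_one[of x] assms ln_2_less_1 by linarith
    finally show ?thesis by simp
  qed
  hence "x \<le> h_fun (2*x)" unfolding h_fun_def by simp
  moreover have "h_fun 1 \<le> x" unfolding h_fun_def using assms by simp
  ultimately obtain u where "1 \<le> u" "u \<le> 2*x" "h_fun u = x"
    using IVT'[of h_fun 1 x "2*x"] c assms by auto
  thus ?thesis by auto
qed

lemma h_inv_props: assumes "x \<ge> 1" shows "h_inv x \<ge> 1" "h_inv x - ln (h_inv x) = x"
proof -
  have "\<exists>!u. u \<ge> 1 \<and> h_fun u = x"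
  proof -
    obtain u where u: "u \<ge> 1" "h_fun u = x" using h_exists assms by blast
    moreover have "v = u" if "v \<ge> 1" "h_fun v = x" for v
      using h_strict[of u v] h_strict[of v u] u that unfolding h_fun_def
      by (cases "u < v"; cases "v < u") auto
    ultimately show ?thesis by blast
  qed
  hence "h_inv x \<ge> 1 \<and> h_fun (h_inv x) = x" unfolding h_inv_def by (rule theI')
  thus "h_inv x \<ge> 1" "h_inv x - ln (h_inv x) = x" unfolding h_fun_def by auto
qed

lemma h_inv_ge: assumes "x \<ge> 1" shows "h_inv x \<ge> x" "h_inv x \<ge> x + ln x"
proof -
  note p = h_inv_props[OF assms]
  have "ln (h_inv x) \<ge> 0" using p by simp
  thus g: "h_inv x \<ge> x" using p by linarith
  have "ln (h_inv x) \<ge> ln x" using g assms by simp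
  thus "h_inv x \<ge> x + ln x" using p by linarith
qed

lemma ln_le_of: "0 < a \<Longrightarrow> a \<le> exp b \<Longrightarrow> ln a \<le> (b::real)"
  by (metis exp_le_cancel_iff exp_ln)
lemma ln_ge_of: "0 < a \<Longrightarrow> exp b \<le> a \<Longrightarrow> b \<le> ln (a::real)"
  by (metis exp_le_cancel_iff exp_ln)

lemma ln2_le: "ln (2::real) \<le> 3/4"
proof -
  have "(2::real) \<le> (1 + (3/4) / real 8) ^ 8" by (simp add: power_divide)
  also have "\<dots> \<le> exp (3/4)"
    by (rule exp_ge_one_plus_x_over_n_power_n) auto
  finally show ?thesis by (intro ln_le_of) auto
qed

lemma ln_1_5_le: "ln (3/2::real) \<le> 1/2"
proof -
  have "(3/2::real) \<le> exp (1/2)" using exp_ge_add_one_self[of "1/2::real"] by simp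
  thus ?thesis by (intro ln_le_of) auto
qed

lemma ln2_ge: "ln (2::real) \<ge> 1/2"
proof -
  have "exp (1/2::real) \<le> 2" by (rule exp_half_le2)
  thus ?thesis by (intro ln_ge_of) auto
qed

lemma h_tilde_ge: assumes "z \<ge> 1" shows "h_tilde z \<ge> z + ln z + 1"
proof (cases "z \<ge> h_inv (1 / ln (3/2))")
  case True
  define v where "v = h_inv z"
  have v: "v \<ge> 1" "v \<ge> z + ln z" using h_inv_props[OF assms] h_inv_ge[OF assms] v_def by auto
  have "exp (1/v) \<ge> 1 + 1/v" by (rule exp_ge_add_one_self)
  hence "exp (1/v) * v \<ge> (1 + 1/v) * v" using v by (intro mult_right_mono) auto
  moreover have "(1 + 1/v) * v = v + 1" using v by (simp add: field_simps)
  ultimately have "exp (1/v) * v \<ge> v + 1" by simp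
  thus ?thesis using True v unfolding h_tilde_def v_def[symmetric] by simp
next
  case False
  have l15: "ln (3/2::real) > 0" by simp
  have "ln (ln (3/2::real)) \<le> ln (1/2)" using ln_1_5_le l15 by (subst ln_le_cancel_iff) auto
  also have "ln (1/2::real) = - ln 2" by (simp add: ln_div)
  finally have a: "ln (ln (3/2::real)) \<le> - ln 2" .
  have "ln z = ln 2 + ln (z/2)" using assms by (simp add: ln_div)
  also have "ln (z/2) \<le> z/2 - 1" using assms by (intro ln_le_minus_one) auto
  finally have b: "ln z \<le> ln 2 + z/2 - 1" by simp
  have "h_tilde z = 3/2 * z - 3/2 * ln (ln (3/2))" using False unfolding h_tilde_def by simp
  thus ?thesis using a b ln2_le ln2_ge by linarith
qed

lemma ln_pi_ge: "ln (pi^2/6 * 2) \<ge> 1"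
proof -
  have "pi^2/6*2 \<ge> 3^2/6*2" using pi_gt3 by (intro mult_right_mono divide_right_mono power_mono) auto
  hence "pi^2/6*2 \<ge> exp 1" using exp_le by simp
  thus ?thesis by (simp add: ln_ge_iff)
qed

lemma calT_ge: assumes "x \<ge> 0" shows "calT x \<ge> 4 + x + ln (1+x) + 2 * ln (1 + x/2)"
proof -
  define u where "u = h_inv (1+x)"
  have u: "u \<ge> 1 + x + ln (1+x)" using h_inv_ge[of "1+x"] assms u_def by auto
  have lx: "ln (1+x) \<ge> 0" using assms by simp
  define z where "z = (u + ln (2 * (pi^2/6))) / 2"
  have lp: "ln (2 * (pi^2/6)) \<ge> 1" using ln_pi_ge by (simp add: mult.commute)
  have "u + ln (2 * (pi^2/6)) \<ge> 2 + x" using u lp lx by linarith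
  hence z: "z \<ge> 1 + x/2" unfolding z_def by simp
  hence z1: "z \<ge> 1" using assms by linarith
  have "ln z \<ge> ln (1 + x/2)" using z assms by simp
  moreover have "h_tilde z \<ge> z + ln z + 1" using h_tilde_ge[OF z1] .
  moreover have "calT x = 2 * h_tilde z" unfolding calT_def z_def u_def by simp
  moreover have "2 * z = u + ln (2 * (pi^2/6))" unfolding z_def by simp
  ultimately show ?thesis using u lp by linarith
qed

definition Lf :: "real \<Rightarrow> real \<Rightarrow> real" where
  "Lf \<delta> n = ln (3 * n * sqrt n / \<delta>)"

definition Bn :: "real \<Rightarrow> real \<Rightarrow> real" where
  "Bn \<delta> n = Lf \<delta> n + 8 + 2 * ln (1 + Lf \<delta> n / 2) + 4 * ln (1 + Lf \<delta> n / 4) + 6 * ln (1 + ln n)"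

lemma Lf_ge: assumes "0 < \<delta>" "\<delta> \<le> 1" "n \<ge> 1" shows "Lf \<delta> n \<ge> 1"
proof -
  have "n * sqrt n \<ge> 1 * 1" using assms by (intro mult_mono) auto
  hence "3 * n * sqrt n \<ge> 3" by simp
  also have "3 * n * sqrt n \<le> 3 * n * sqrt n / \<delta>" using assms calculation
    by (simp add: le_divide_eq)
  finally have "3 * n * sqrt n / \<delta> \<ge> 3" .
  hence "Lf \<delta> n \<ge> ln 3" unfolding Lf_def using assms by (subst ln_le_cancel_iff) auto
  moreover have "ln (3::real) \<ge> 1" using exp_le by (simp add: ln_ge_iff)
  ultimately show ?thesis by simp
qed

lemma beta_ge: assumes "0 < \<delta>" "\<delta> \<le> 1" "n \<ge> 1" shows "beta_thr n \<delta> \<ge> Bn \<delta> (real n)"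
proof -
  have L: "Lf \<delta> n \<ge> 1" using Lf_ge assms by simp
  have "calT (Lf \<delta> n / 2) \<ge> 4 + Lf \<delta> n/2 + ln (1 + Lf \<delta> n/2) + 2 * ln (1 + Lf \<delta> n/2/2)"
    using calT_ge[of "Lf \<delta> n/2"] L by simp
  thus ?thesis unfolding beta_thr_def Bn_def Lf_def by simp
qed

definition ell :: "real \<Rightarrow> real \<Rightarrow> real \<Rightarrow> real" where
  "ell y th x = x * ln (th / y) + (1 - x) * ln ((1 - th) / (1 - y))"

lemma ln_ge_one_minus_inv: "0 < t \<Longrightarrow> ln (t::real) \<ge> 1 - 1/t"
  using ln_le_minus_one[of "1/t"] by (simp add: ln_div)

lemma kl_nonneg: assumes "0 \<le> x" "x \<le> 1" "0 < y" "y < 1" shows "kl x y \<ge> 0"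
proof -
  have a: "(if x = 0 then 0 else x * ln (x / y)) \<ge> x - y"
  proof (cases "x = 0")
    case False
    hence "ln (x/y) \<ge> 1 - y/x" using assms ln_ge_one_minus_inv[of "x/y"]
      by (simp add: field_simps)  
    hence "x * ln (x/y) \<ge> x * (1 - y/x)" using assms by (intro mult_left_mono) auto
    moreover have "x * (1 - y/x) = x - y" using False by (simp add: field_simps)
    ultimately show ?thesis using False by simp
  qed (use assms in auto)
  have b: "(if x = 1 then 0 else (1-x) * ln ((1-x) / (1-y))) \<ge> y - x"
  proof (cases "x = 1")
    case False
    hence "ln ((1-x)/(1-y)) \<ge> 1 - (1-y)/(1-x)" using assms ln_ge_one_minus_inv[of "(1-x)/(1-y)"]
      by (simp add: field_simps)
    hence "(1-x) * ln ((1-x)/(1-y)) \<ge> (1-x) * (1 - (1-y)/(1-x))" using assms by (intro mult_left_mono) auto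
    moreover have "(1-x) * (1 - (1-y)/(1-x)) = y - x" using False by (simp add: field_simps)
    ultimately show ?thesis using False by simp
  qed (use assms in auto)
  show ?thesis using a b unfolding kl_def by linarith
qed

lemma kl_decomp: assumes "0 \<le> x" "x \<le> 1" "0 < y" "y < 1" "0 < th" "th < 1"
  shows "kl x y = ell y th x + kl x th"
proof -
  have a: "(if x = 0 then 0 else x * ln (x / y)) = x * ln (th/y) + (if x = 0 then 0 else x * ln (x / th))"
    using assms by (auto simp: ln_div algebra_simps)
  have b: "(if x = 1 then 0 else (1-x) * ln ((1-x) / (1-y))) = (1-x) * ln ((1-th)/(1-y)) + (if x = 1 then 0 else (1-x) * ln ((1-x) / (1-th)))"
    using assms by (auto simp: ln_div algebra_simps)
  show ?thesis unfolding kl_def ell_def a b by simp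
qed

lemma kl_self: "0 \<le> x \<Longrightarrow> x \<le> 1 \<Longrightarrow> kl x x = 0"
  unfolding kl_def by auto

lemma ell_self: assumes "0 < y" "y < 1" "0 < th" "th < 1" shows "ell y th th = kl th y"
  using kl_decomp[of th y th] kl_self[of th] assms by simp

lemma ell_affine: "ell y th x = ln ((1 - th) / (1 - y)) + x * (ln (th / y) - ln ((1 - th) / (1 - y)))"
  unfolding ell_def by (simp add: algebra_simps)

lemma ell_mono_up: assumes "0 < y" "y \<le> th" "th < 1" "x \<le> x'" shows "ell y th x \<le> ell y th x'"
proof -
  have "ln (th / y) \<ge> 0" using assms by simp
  moreover have "ln ((1 - th) / (1 - y)) \<le> 0" using assms by simp
  ultimately have "ln (th / y) - ln ((1 - th) / (1 - y)) \<ge> 0" by simp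
  thus ?thesis unfolding ell_affine using assms by (simp add: mult_right_mono)
qed

lemma ell_mono_dn: assumes "0 < th" "th \<le> y" "y < 1" "x' \<le> x" shows "ell y th x \<le> ell y th x'"
proof -
  have "ln (th / y) \<le> 0" using assms by simp
  moreover have "ln ((1 - th) / (1 - y)) \<ge> 0" using assms by simp
  ultimately have "ln (th / y) - ln ((1 - th) / (1 - y)) \<le> 0" by simp
  thus ?thesis unfolding ell_affine using assms by (simp add: mult_right_mono_neg)
qed

lemma kl_sym: "kl (1 - x) (1 - y) = kl x y"
  unfolding kl_def by auto

lemma ell_sym: "ell (1 - y) (1 - th) (1 - x) = ell y th x"
  unfolding ell_def by simp

lemma kl_formula: "0 < t \<Longrightarrow> t < 1 \<Longrightarrow> kl t y = t * ln (t / y) + (1 - t) * ln ((1 - t) / (1 - y))"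
  unfolding kl_def by auto

lemma xlnx_lim: "((\<lambda>t::real. (1 - t) * ln (1 - t)) \<longlongrightarrow> 0) (at_left 1)"
  by real_asymp

lemma kl_lim1: assumes "0 < y" "y < 1" shows "((\<lambda>t. kl t y) \<longlongrightarrow> kl 1 y) (at_left 1)"
proof -
  have e: "eventually (\<lambda>t. t * ln (t / y) + ((1 - t) * ln (1 - t) - (1 - t) * ln (1 - y)) = kl t y) (at_left 1)"
    using eventually_at_left_real[of 0 "1::real", OF zero_less_one]
  proof (rule eventually_mono)
    fix t :: real assume "t \<in> {0<..<1}"
    thus "t * ln (t / y) + ((1 - t) * ln (1 - t) - (1 - t) * ln (1 - y)) = kl t y"
      using assms by (simp add: kl_formula ln_div algebra_simps)
  qed
  have "((\<lambda>t. t * ln (t / y) + ((1 - t) * ln (1 - t) - (1 - t) * ln (1 - y))) \<longlongrightarrow>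
     1 * ln (1 / y) + (0 - (1 - 1) * ln (1 - y))) (at_left 1)"
    by (intro tendsto_intros xlnx_lim) (use assms in auto)
  hence "((\<lambda>t. t * ln (t / y) + ((1 - t) * ln (1 - t) - (1 - t) * ln (1 - y))) \<longlongrightarrow> kl 1 y) (at_left 1)"
    unfolding kl_def by simp
  thus ?thesis using e by (rule Lim_transform_eventually)
qed

lemma kl_cont: assumes "0 < a" "b < 1" "0 < y" "y < 1" shows "continuous_on {a..b} (\<lambda>t. kl t y)"
proof -
  have "continuous_on {a..b} (\<lambda>t. t * ln (t / y) + (1 - t) * ln ((1 - t) / (1 - y)))"
    using assms by (intro continuous_intros) auto
  thus ?thesis by (rule continuous_on_cong[THEN iffD1, rotated 2]) (use assms in \<open>auto simp: kl_formula\<close>)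
qed

lemma exists_up: assumes "0 < y" "y \<le> x" "x \<le> 1" "0 < q" "q < kl x y"
  shows "\<exists>th. y < th \<and> th < 1 \<and> kl th y = q"
proof -
  have main: "\<exists>th. y < th \<and> th < 1 \<and> kl th y = q" if a1: "y \<le> x'" and a2: "x' < 1" and a3: "q < kl x' y" for x'
  proof -
    have y1: "y < 1" using a1 a2 by simp
    have "kl y y \<le> q" using kl_self[of y] assms y1 by simp
    moreover have "continuous_on {y..x'} (\<lambda>t. kl t y)" using kl_cont[of y x' y] a2 assms y1 by simp
    ultimately obtain th where th: "y \<le> th" "th \<le> x'" "kl th y = q"
      using IVT'[of "\<lambda>t. kl t y" y q x'] a1 a3 by auto
    have "th \<noteq> y" using th kl_self[of y] assms y1 by auto
    hence "y < th \<and> th < 1 \<and> kl th y = q" using th a2 by auto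
    thus ?thesis by blast
  qed
  show ?thesis
  proof (cases "x < 1")
    case True thus ?thesis using main assms by auto
  next
    case False
    hence x1: "x = 1" using assms by simp
    have "y < 1" using assms x1 
      by (metis kl_self less_eq_real_def linorder_not_less order.trans assms(1) assms(4) assms(5) zero_le_one)
    have "eventually (\<lambda>t. q < kl t y) (at_left 1)"
      using order_tendstoD(1)[OF kl_lim1[OF assms(1) \<open>y < 1\<close>]] assms x1 by simp
    moreover have "eventually (\<lambda>t. t \<in> {y<..<1}) (at_left 1)"
      using eventually_at_left_real[OF \<open>y < 1\<close>] .
    ultimately have "eventually (\<lambda>t. q < kl t y \<and> t \<in> {y<..<1}) (at_left 1)"
      by (rule eventually_conj)
    then obtain t where "q < kl t y" "t \<in> {y<..<1}"
      using eventually_happens[of _ "at_left (1::real)"] by (auto simp: trivial_limit_at_left_real)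
    thus ?thesis using main[of t] by simp
  qed
qed

lemma exists_dn: assumes "y < 1" "x \<le> y" "0 \<le> x" "0 < q" "q < kl x y"
  shows "\<exists>th. 0 < th \<and> th < y \<and> kl th y = q"
proof -
  have "\<exists>th. 1 - y < th \<and> th < 1 \<and> kl th (1 - y) = q"
    using exists_up[of "1-y" "1-x" q] assms kl_sym[of x y] by auto
  then obtain th where "1 - y < th" "th < 1" "kl th (1-y) = q" by auto
  thus ?thesis using kl_sym[of "1 - th" y] by (intro exI[of _ "1 - th"]) auto
qed

definition th_up :: "real \<Rightarrow> real \<Rightarrow> real" where
  "th_up y q = (if q > 0 \<and> (\<exists>th. y < th \<and> th < 1 \<and> kl th y = q) then (SOME th. y < th \<and> th < 1 \<and> kl th y = q) else y)"
definition th_dn :: "real \<Rightarrow> real \<Rightarrow> real" where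
  "th_dn y q = (if q > 0 \<and> (\<exists>th. 0 < th \<and> th < y \<and> kl th y = q) then (SOME th. 0 < th \<and> th < y \<and> kl th y = q) else y)"
definition thc :: "real \<Rightarrow> real \<Rightarrow> bool \<Rightarrow> real" where
  "thc y q b = (if b then th_up y q else th_dn y q)"

lemma thc_range: assumes "0 < y" "y < 1" shows "0 < thc y q b \<and> thc y q b < 1"
proof -
  have "0 < th_up y q \<and> th_up y q < 1"
  proof (cases "q > 0 \<and> (\<exists>th. y < th \<and> th < 1 \<and> kl th y = q)")
    case True
    hence "y < th_up y q \<and> th_up y q < 1 \<and> kl (th_up y q) y = q"
      unfolding th_up_def using someI_ex[of "\<lambda>th. y < th \<and> th < 1 \<and> kl th y = q"] by auto
    thus ?thesis using assms by auto
  qed (use assms in \<open>auto simp: th_up_def\<close>)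
  moreover have "0 < th_dn y q \<and> th_dn y q < 1"
  proof (cases "q > 0 \<and> (\<exists>th. 0 < th \<and> th < y \<and> kl th y = q)")
    case True
    hence "0 < th_dn y q \<and> th_dn y q < y \<and> kl (th_dn y q) y = q"
      unfolding th_dn_def using someI_ex[of "\<lambda>th. 0 < th \<and> th < y \<and> kl th y = q"] by auto
    thus ?thesis using assms by auto
  qed (use assms in \<open>auto simp: th_dn_def\<close>)
  ultimately show ?thesis unfolding thc_def by auto
qed

lemma thc_ell: assumes "0 < y" "y < 1" "0 \<le> x" "x \<le> 1" "q \<ge> 0" "q = 0 \<or> q < kl x y"
  shows "ell y (thc y q (y \<le> x)) x \<ge> q"
proof (cases "q = 0")
  case True
  hence "thc y q (y \<le> x) = y" unfolding thc_def th_up_def th_dn_def by auto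
  thus ?thesis using True assms unfolding ell_def by simp
next
  case False
  hence q: "0 < q" "q < kl x y" using assms by auto
  show ?thesis
  proof (cases "y \<le> x")
    case True
    have ex: "\<exists>th. y < th \<and> th < 1 \<and> kl th y = q" using exists_up[of y x q] True q assms by auto
    define th where "th = th_up y q"
    have th: "y < th" "th < 1" "kl th y = q"
      unfolding th_def th_up_def using someI_ex[OF ex] q ex by auto
    have "th \<le> x"
    proof (rule ccontr)
      assume "\<not> th \<le> x"
      hence "x < th" by simp
      have x01: "0 < x" "x < 1" using True \<open>x < th\<close> th assms by auto
      have "kl th y = ell y x th + kl th x" using kl_decomp[of th y x] th x01 assms by simp
      moreover have "kl th x \<ge> 0" using kl_nonneg[of th x] th x01 assms by simp
      moreover have "ell y x th \<ge> ell y x x" using ell_mono_up[of y x x th] True x01 \<open>x < th\<close> assms by simp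
      moreover have "ell y x x = kl x y" using ell_self[of y x] x01 assms by simp
      ultimately show False using th q by simp
    qed
    hence "ell y th x \<ge> ell y th th" using ell_mono_up[of y th th x] th assms by simp
    moreover have "ell y th th = q" using ell_self[of y th] th assms by simp
    ultimately show ?thesis using True unfolding thc_def th_def by simp
  next
    case False
    have ex: "\<exists>th. 0 < th \<and> th < y \<and> kl th y = q" using exists_dn[of y x q] False q assms by auto
    define th where "th = th_dn y q"
    have th: "0 < th" "th < y" "kl th y = q"
      unfolding th_def th_dn_def using someI_ex[OF ex] q ex by auto
    have "x \<le> th"
    proof (rule ccontr)
      assume "\<not> x \<le> th"
      hence "th < x" by simp
      have x01: "0 < x" "x < 1" using False \<open>th < x\<close> th assms by auto
      have "kl th y = ell y x th + kl th x" using kl_decomp[of th y x] th x01 assms by simp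
      moreover have "kl th x \<ge> 0" using kl_nonneg[of th x] th x01 assms by simp
      moreover have "ell y x th \<ge> ell y x x" using ell_mono_dn[of x y th x] False x01 \<open>th < x\<close> assms by simp
      moreover have "ell y x x = kl x y" using ell_self[of y x] x01 assms by simp
      ultimately show False using th q by simp
    qed
    hence "ell y th x \<ge> ell y th th" using ell_mono_dn[of th y x th] th assms by simp
    moreover have "ell y th th = q" using ell_self[of y th] th assms by simp
    ultimately show ?thesis using False unfolding thc_def th_def by simp
  qed
qed

definition Pp :: "(nat \<Rightarrow> real \<Rightarrow> real) \<Rightarrow> (nat \<Rightarrow> real) \<Rightarrow> nat \<Rightarrow> real" where
  "Pp f x n = (\<Prod>t\<in>{1..n}. f t (x t))"
definition cr :: "(nat \<Rightarrow> real \<Rightarrow> real) \<Rightarrow> real \<Rightarrow> (nat \<Rightarrow> real) \<Rightarrow> nat \<Rightarrow> bool" where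
  "cr f c x n = (\<exists>k\<le>n. c \<le> Pp f x k)"
primrec Qq :: "(nat \<Rightarrow> real \<Rightarrow> real) \<Rightarrow> real \<Rightarrow> (nat \<Rightarrow> real) \<Rightarrow> nat \<Rightarrow> real" where
  "Qq f c x 0 = 1"
| "Qq f c x (Suc n) = (if cr f c x n then Qq f c x n else Pp f x (Suc n))"

lemma Pp_Suc: "Pp f x (Suc n) = Pp f x n * f (Suc n) (x (Suc n))"
  unfolding Pp_def by (simp add: prod.nat_ivl_Suc' mult.commute)

lemma Pp_0: "Pp f x 0 = 1" unfolding Pp_def by simp

lemma cr_Suc: "cr f c x (Suc n) = (cr f c x n \<or> c \<le> Pp f x (Suc n))"
  unfolding cr_def using le_Suc_eq by auto

lemma Qq_not_cr: "\<not> cr f c x n \<Longrightarrow> Qq f c x n = Pp f x n"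
  by (induction n) (auto simp: Pp_0 cr_Suc)

lemma Qq_cr: "cr f c x n \<Longrightarrow> c \<le> Qq f c x n"
proof (induction n)
  case 0 thus ?case by (simp add: cr_def Pp_0)
next
  case (Suc n) thus ?case by (auto simp: cr_Suc)
qed

lemma Qq_in: "\<exists>k\<le>n. Qq f c x n = Pp f x k"
proof (induction n)
  case 0 thus ?case by (simp add: Pp_0)
next
  case (Suc n) thus ?case using le_Suc_eq by auto
qed

lemma Pp_bound: assumes "\<And>t x. 0 \<le> f t x \<and> f t x \<le> Bd" "k \<le> n"
  shows "0 \<le> Pp f x k \<and> Pp f x k \<le> max 1 Bd ^ n"
proof -
  have "Pp f x k \<le> (\<Prod>t\<in>{1..k}. max 1 Bd)" unfolding Pp_def
    using assms by (intro prod_mono) (auto intro: order.trans[OF _ max.cobounded2])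
  also have "\<dots> = max 1 Bd ^ k" by simp
  also have "\<dots> \<le> max 1 Bd ^ n" using assms by (intro power_increasing) auto
  finally show ?thesis using assms unfolding Pp_def by (auto intro: prod_nonneg)
qed

lemma Qq_bound: assumes "\<And>t x. 0 \<le> f t x \<and> f t x \<le> Bd"
  shows "0 \<le> Qq f c x n \<and> Qq f c x n \<le> max 1 Bd ^ n"
  using Qq_in[of n f c x] Pp_bound[OF assms] by auto

lemma Qq_Suc_split: "Qq f c x (Suc n) = indicator {x. cr f c x n} x * Qq f c x n
   + (1 - indicator {x. cr f c x n} x) * (Pp f x n * f (Suc n) (x (Suc n)))"
  by (auto simp: Pp_Suc)

lemma Pp_cong: "(\<And>t. 1 \<le> t \<Longrightarrow> t \<le> n \<Longrightarrow> x t = x' t) \<Longrightarrow> k \<le> n \<Longrightarrow> Pp f x k = Pp f x' k"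
  unfolding Pp_def by (intro prod.cong) auto

lemma cr_cong: "(\<And>t. 1 \<le> t \<Longrightarrow> t \<le> n \<Longrightarrow> x t = x' t) \<Longrightarrow> cr f c x n = cr f c x' n"
  unfolding cr_def using Pp_cong[of n x x' _ f] by (metis)

lemma meas_Pp: assumes "\<And>t. f t \<in> borel_measurable borel"
  "\<And>t. 1 \<le> t \<Longrightarrow> t \<le> n \<Longrightarrow> (\<lambda>\<omega>. xo \<omega> t) \<in> borel_measurable N" "k \<le> n"
  shows "(\<lambda>\<omega>. Pp f (xo \<omega>) k) \<in> borel_measurable N"
  unfolding Pp_def using assms
  by (intro borel_measurable_prod) (auto intro: measurable_compose[OF _ assms(1)])

lemma meas_cr: assumes "\<And>t. f t \<in> borel_measurable borel"
  "\<And>t. 1 \<le> t \<Longrightarrow> t \<le> n \<Longrightarrow> (\<lambda>\<omega>. xo \<omega> t) \<in> borel_measurable N"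
  shows "{\<omega> \<in> space N. cr f c (xo \<omega>) n} \<in> sets N"
proof -
  have "{\<omega> \<in> space N. cr f c (xo \<omega>) n} = (\<Union>k\<in>{..n}. {\<omega> \<in> space N. c \<le> Pp f (xo \<omega>) k})"
    unfolding cr_def by auto
  also have "\<dots> \<in> sets N"
    using meas_Pp[OF assms] by (intro sets.finite_UN) auto
  finally show ?thesis .
qed

lemma meas_Qq: assumes "\<And>t. f t \<in> borel_measurable borel"
  "\<And>t. 1 \<le> t \<Longrightarrow> t \<le> n \<Longrightarrow> (\<lambda>\<omega>. xo \<omega> t) \<in> borel_measurable N"
  shows "(\<lambda>\<omega>. Qq f c (xo \<omega>) n) \<in> borel_measurable N"
  using assms
proof (induction n)
  case 0 thus ?case by simp
next
  case (Suc n)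
  have ih: "(\<lambda>\<omega>. Qq f c (xo \<omega>) n) \<in> borel_measurable N" using Suc by auto
  have s: "{\<omega> \<in> space N. cr f c (xo \<omega>) n} \<in> sets N" using meas_cr[of f n xo N c] Suc by auto
  have p: "(\<lambda>\<omega>. Pp f (xo \<omega>) (Suc n)) \<in> borel_measurable N" using meas_Pp[of f "Suc n" xo N "Suc n"] Suc by auto
  have "(\<lambda>\<omega>. if \<omega> \<in> {\<omega> \<in> space N. cr f c (xo \<omega>) n} then Qq f c (xo \<omega>) n else Pp f (xo \<omega>) (Suc n)) \<in> borel_measurable N"
    using s ih p by (intro measurable_If_set) auto
  moreover have "\<And>\<omega>. \<omega> \<in> space N \<Longrightarrow> (if \<omega> \<in> {\<omega> \<in> space N. cr f c (xo \<omega>) n} then Qq f c (xo \<omega>) n else Pp f (xo \<omega>) (Suc n)) = Qq f c (xo \<omega>) (Suc n)"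
    by simp
  ultimately show ?case by (rule measurable_cong[THEN iffD1, rotated])
qed

lemma meas_if: assumes "{\<omega> \<in> space N. P \<omega>} \<in> sets N" "g \<in> borel_measurable N" "h \<in> borel_measurable N"
  shows "(\<lambda>\<omega>. if P \<omega> then g \<omega> else h \<omega> :: real) \<in> borel_measurable N"
proof -
  have "(\<lambda>\<omega>. if \<omega> \<in> {\<omega> \<in> space N. P \<omega>} then g \<omega> else h \<omega>) \<in> borel_measurable N"
    using assms by (intro measurable_If_set) auto
  thus ?thesis by (rule measurable_cong[THEN iffD1, rotated]) auto
qed

context prob_space begin

lemma int_bdd: "f \<in> borel_measurable M \<Longrightarrow> (\<And>x. 0 \<le> f x \<and> f x \<le> (B::real)) \<Longrightarrow> integrable M f"
  by (rule integrable_const_bound[where B=B]) auto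

lemma ville_step:
  assumes ind: "indep_vars (\<lambda>_. borel) X {1..}"
    and fm: "\<And>t. f t \<in> borel_measurable borel"
    and fb: "\<And>t x. 0 \<le> f t x \<and> f t x \<le> Bd"
    and fi: "\<And>t. t \<ge> 1 \<Longrightarrow> expectation (\<lambda>\<omega>. f t (X t \<omega>)) \<le> 1"
  shows "expectation (\<lambda>\<omega>. Qq f c (\<lambda>t. X t \<omega>) (Suc n)) \<le> expectation (\<lambda>\<omega>. Qq f c (\<lambda>t. X t \<omega>) n)"
proof -
  define Xs where "Xs \<omega> = (\<lambda>t. X t \<omega>)" for \<omega>
  have Xm: "X t \<in> borel_measurable M" if "t \<ge> 1" for t
    using ind that unfolding indep_vars_def by auto
  have Xsm: "(\<lambda>\<omega>. Xs \<omega> t) \<in> borel_measurable M" if "t \<ge> 1" for t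
    using Xm[OF that] unfolding Xs_def by simp
  define G where "G x = (if cr f c x n then 0 else Pp f x n)" for x
  define H where "H x = f (Suc n) (x (Suc n))" for x :: "nat \<Rightarrow> real"
  define Q1 where "Q1 \<omega> = (if cr f c (Xs \<omega>) n then Qq f c (Xs \<omega>) n else 0)" for \<omega>
  define Q2 where "Q2 \<omega> = (if cr f c (Xs \<omega>) n then 0 else Qq f c (Xs \<omega>) n)" for \<omega>
  define BB where "BB = max 1 Bd ^ Suc n"
  have B1: "max 1 Bd ^ n \<le> BB" unfolding BB_def by (intro power_increasing) auto
  have bQ: "0 \<le> Qq f c x n \<and> Qq f c x n \<le> BB" for x using Qq_bound[of f Bd c x n] fb B1 by auto
  have BB0: "0 \<le> BB" using bQ[of undefined] by linarith
  have bQ': "0 \<le> Qq f c x (Suc n) \<and> Qq f c x (Suc n) \<le> BB" for x using Qq_bound[of f Bd c x "Suc n"] fb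
    unfolding BB_def by auto
  have bP: "0 \<le> Pp f x n \<and> Pp f x n \<le> BB" for x using Pp_bound[of f Bd n n x] fb B1 by auto
  have bH: "0 \<le> H x \<and> H x \<le> Bd" for x unfolding H_def using fb by auto
  have Qm: "\<And>m. (\<lambda>\<omega>. Qq f c (Xs \<omega>) m) \<in> borel_measurable M"
    using meas_Qq[OF fm, of _ Xs M] Xsm by auto
  have Am: "{\<omega> \<in> space M. cr f c (Xs \<omega>) n} \<in> sets M" using meas_cr[OF fm, of n Xs M] Xsm by auto
  have Q1m: "Q1 \<in> borel_measurable M" unfolding Q1_def
    by (rule meas_if[OF Am Qm[of n] borel_measurable_const])
  have Q2m: "Q2 \<in> borel_measurable M" unfolding Q2_def
    by (rule meas_if[OF Am borel_measurable_const Qm[of n]])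
  have Gm: "G \<in> borel_measurable (PiM {1..n} (\<lambda>_. borel))"
  proof -
    have c: "\<And>t. 1 \<le> t \<Longrightarrow> t \<le> n \<Longrightarrow> (\<lambda>\<omega>. id \<omega> t) \<in> borel_measurable (PiM {1..n} (\<lambda>_. borel))"
      by (simp add: measurable_component_singleton)
    have "{\<omega> \<in> space (PiM {1..n} (\<lambda>_. borel)). cr f c (id \<omega>) n} \<in> sets (PiM {1..n} (\<lambda>_. borel))"
      using meas_cr[of f n id "PiM {1..n} (\<lambda>_. borel)" c] fm c by blast
    moreover have "(\<lambda>\<omega>. Pp f (id \<omega>) n) \<in> borel_measurable (PiM {1..n} (\<lambda>_. borel))"
      using meas_Pp[of f n id "PiM {1..n} (\<lambda>_. borel)" n] fm c by blast
    ultimately show ?thesis unfolding G_def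
      by (intro meas_if) auto
  qed
  have Hm: "H \<in> borel_measurable (PiM {Suc n} (\<lambda>_. borel))" unfolding H_def
    by (intro measurable_compose[OF _ fm] measurable_component_singleton) auto
  have indep: "indep_var borel (G \<circ> (\<lambda>\<omega>. restrict (\<lambda>i. X i \<omega>) {1..n})) borel (H \<circ> (\<lambda>\<omega>. restrict (\<lambda>i. X i \<omega>) {Suc n}))"
    by (rule indep_var_compose[OF indep_var_restrict[OF ind] Gm Hm]) auto
  have e1: "(G \<circ> (\<lambda>\<omega>. restrict (\<lambda>i. X i \<omega>) {1..n})) = (\<lambda>\<omega>. G (Xs \<omega>))"
  proof
    fix \<omega>
    have "cr f c (restrict (\<lambda>i. X i \<omega>) {1..n}) n = cr f c (Xs \<omega>) n"
      by (rule cr_cong) (auto simp: Xs_def)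
    moreover have "Pp f (restrict (\<lambda>i. X i \<omega>) {1..n}) n = Pp f (Xs \<omega>) n"
      by (rule Pp_cong) (auto simp: Xs_def)
    ultimately show "(G \<circ> (\<lambda>\<omega>. restrict (\<lambda>i. X i \<omega>) {1..n})) \<omega> = G (Xs \<omega>)"
      unfolding G_def by simp
  qed
  have e2: "(H \<circ> (\<lambda>\<omega>. restrict (\<lambda>i. X i \<omega>) {Suc n})) = (\<lambda>\<omega>. f (Suc n) (X (Suc n) \<omega>))"
    by (auto simp: H_def)
  have GXm: "(\<lambda>\<omega>. G (Xs \<omega>)) \<in> borel_measurable M"
    using indep e1 unfolding indep_var_def indep_vars_def by (auto split: bool.splits)
  have HXm: "(\<lambda>\<omega>. f (Suc n) (X (Suc n) \<omega>)) \<in> borel_measurable M"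
    using fm Xm[of "Suc n"] by (auto intro: measurable_compose)
  have bG: "0 \<le> G x \<and> G x \<le> BB" for x using bP[of x] unfolding G_def by (auto intro: order.trans)
  have iG: "integrable M (\<lambda>\<omega>. G (Xs \<omega>))" by (rule int_bdd[OF GXm]) (use bG in auto)
  have iH: "integrable M (\<lambda>\<omega>. f (Suc n) (X (Suc n) \<omega>))" by (rule int_bdd[OF HXm]) (use fb in auto)
  have iQ1: "integrable M Q1" by (rule int_bdd[OF Q1m, where B=BB]) (use bQ BB0 in \<open>auto simp: Q1_def\<close>)
  have iQ2: "integrable M Q2" by (rule int_bdd[OF Q2m, where B=BB]) (use bQ BB0 in \<open>auto simp: Q2_def\<close>)
  have prod: "expectation (\<lambda>\<omega>. G (Xs \<omega>) * f (Suc n) (X (Suc n) \<omega>)) =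
      expectation (\<lambda>\<omega>. G (Xs \<omega>)) * expectation (\<lambda>\<omega>. f (Suc n) (X (Suc n) \<omega>))"
    using indep_var_lebesgue_integral[OF indep] iG iH unfolding e1 e2 by simp
  have iGH: "integrable M (\<lambda>\<omega>. G (Xs \<omega>) * f (Suc n) (X (Suc n) \<omega>))"
    using indep_var_integrable[OF indep] iG iH unfolding e1 e2 by simp
  have split: "Qq f c (Xs \<omega>) (Suc n) = Q1 \<omega> + G (Xs \<omega>) * f (Suc n) (X (Suc n) \<omega>)" for \<omega>
    unfolding Q1_def G_def by (simp add: Pp_Suc Xs_def)
  have GQ2: "G (Xs \<omega>) = Q2 \<omega>" for \<omega> unfolding G_def Q2_def using Qq_not_cr by auto
  have "expectation (\<lambda>\<omega>. Qq f c (Xs \<omega>) (Suc n)) = expectation Q1 + expectation (\<lambda>\<omega>. G (Xs \<omega>)) * expectation (\<lambda>\<omega>. f (Suc n) (X (Suc n) \<omega>))"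
    unfolding split using iQ1 iGH prod by simp
  also have "\<dots> \<le> expectation Q1 + expectation (\<lambda>\<omega>. G (Xs \<omega>)) * 1"
  proof -
    have "expectation (\<lambda>\<omega>. G (Xs \<omega>)) \<ge> 0" using bG by (intro integral_nonneg_AE) auto
    thus ?thesis using fi[of "Suc n"] by (simp add: mult_left_le)
  qed
  also have "\<dots> = expectation Q1 + expectation Q2" using GQ2 by simp
  also have "\<dots> = expectation (\<lambda>\<omega>. Q1 \<omega> + Q2 \<omega>)" using iQ1 iQ2 by simp
  also have "(\<lambda>\<omega>. Q1 \<omega> + Q2 \<omega>) = (\<lambda>\<omega>. Qq f c (Xs \<omega>) n)" unfolding Q1_def Q2_def by auto
  finally show ?thesis unfolding Xs_def .
qed

lemma ville:
  assumes ind: "indep_vars (\<lambda>_. borel) X {1..}"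
    and fm: "\<And>t. f t \<in> borel_measurable borel"
    and fb: "\<And>t x. 0 \<le> f t x \<and> f t x \<le> Bd"
    and fi: "\<And>t. t \<ge> 1 \<Longrightarrow> expectation (\<lambda>\<omega>. f t (X t \<omega>)) \<le> 1"
    and c: "c > 0"
  shows "prob {\<omega> \<in> space M. cr f c (\<lambda>t. X t \<omega>) N} \<le> 1 / c"
proof -
  define Xs where "Xs \<omega> = (\<lambda>t. X t \<omega>)" for \<omega>
  have Xsm: "(\<lambda>\<omega>. Xs \<omega> t) \<in> borel_measurable M" if "t \<ge> 1" for t
    using ind that unfolding indep_vars_def Xs_def by auto
  have E: "expectation (\<lambda>\<omega>. Qq f c (Xs \<omega>) m) \<le> 1" for m
  proof (induction m)
    case 0 thus ?case by (simp add: prob_space)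
  next
    case (Suc m) thus ?case using ville_step[OF ind fm fb fi, of c m] unfolding Xs_def by simp
  qed
  define A where "A = {\<omega> \<in> space M. cr f c (Xs \<omega>) N}"
  have Am: "A \<in> sets M" unfolding A_def using meas_cr[OF fm, of N Xs M] Xsm by auto
  have Qm: "(\<lambda>\<omega>. Qq f c (Xs \<omega>) N) \<in> borel_measurable M"
    using meas_Qq[OF fm, of N Xs M] Xsm by auto
  have iQ: "integrable M (\<lambda>\<omega>. Qq f c (Xs \<omega>) N)"
    by (rule int_bdd[OF Qm, where B="max 1 Bd ^ N"]) (use Qq_bound[of f Bd] fb in auto)
  have "c * prob A = expectation (\<lambda>\<omega>. c * indicator A \<omega>)" using Am by simp
  also have "\<dots> \<le> expectation (\<lambda>\<omega>. Qq f c (Xs \<omega>) N)"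
  proof (rule integral_mono)
    show "integrable M (\<lambda>\<omega>. c * indicator A \<omega>)" using Am
      by (intro integrable_mult_right integrable_real_indicator) (auto simp: emeasure_eq_measure)
    show "integrable M (\<lambda>\<omega>. Qq f c (Xs \<omega>) N)" by (rule iQ)
    fix \<omega> assume "\<omega> \<in> space M"
    show "c * indicator A \<omega> \<le> Qq f c (Xs \<omega>) N"
      using Qq_cr[of f c "Xs \<omega>" N] Qq_bound[of f Bd c "Xs \<omega>" N] fb \<open>\<omega> \<in> space M\<close>
      unfolding A_def by (auto simp: indicator_def)
  qed
  also have "\<dots> \<le> 1" by (rule E)
  finally show ?thesis using c unfolding A_def Xs_def by (simp add: field_simps)
qed

end

definition gf :: "real \<Rightarrow> real \<Rightarrow> real \<Rightarrow> real" where
  "gf y th x = exp (ell y th (max 0 (min 1 x)))"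

lemma exp_cvx: assumes "0 \<le> x" "x \<le> 1" shows "exp ((1-x)*a + x*b) \<le> (1-x) * exp a + x * exp (b::real)"
proof -
  define m where "m = (1-x)*a + x*b"
  have "exp a = exp m * exp (a - m)" by (simp add: exp_diff)
  hence ea: "exp a \<ge> exp m * (1 + (a - m))" using exp_ge_add_one_self[of "a-m"] by (simp add: mult_left_mono)
  have "exp b = exp m * exp (b - m)" by (simp add: exp_diff)
  hence eb: "exp b \<ge> exp m * (1 + (b - m))" using exp_ge_add_one_self[of "b-m"] by (simp add: mult_left_mono)
  have "(1-x) * exp a + x * exp b \<ge> (1-x) * (exp m * (1 + (a - m))) + x * (exp m * (1 + (b - m)))"
    using ea eb assms by (intro add_mono mult_left_mono) auto
  also have "(1-x) * (exp m * (1 + (a - m))) + x * (exp m * (1 + (b - m))) = exp m * (1 + ((1-x)*a + x*b) - m)"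
    by (simp add: algebra_simps)
  also have "\<dots> = exp m" unfolding m_def by simp
  finally show ?thesis unfolding m_def .
qed

lemma gf_le: assumes "0 < y" "y < 1" "0 < th" "th < 1" "0 \<le> x" "x \<le> 1"
  shows "gf y th x \<le> (1 - x) * ((1 - th) / (1 - y)) + x * (th / y)"
proof -
  have "gf y th x = exp ((1-x) * ln ((1 - th) / (1 - y)) + x * ln (th / y))"
    unfolding gf_def ell_def using assms by (simp add: algebra_simps)
  also have "\<dots> \<le> (1-x) * exp (ln ((1 - th) / (1 - y))) + x * exp (ln (th / y))"
    by (rule exp_cvx) (use assms in auto)
  also have "\<dots> = (1 - x) * ((1 - th) / (1 - y)) + x * (th / y)" using assms by simp
  finally show ?thesis .
qed

lemma gf_meas: "gf y th \<in> borel_measurable borel"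
  unfolding gf_def ell_def by measurable

lemma gf_bound: "0 \<le> gf y th x \<and> gf y th x \<le> exp (\<bar>ln (th / y)\<bar> + \<bar>ln ((1 - th) / (1 - y))\<bar>)"
proof -
  define z where "z = max 0 (min 1 x)"
  have z: "0 \<le> z" "z \<le> 1" unfolding z_def by auto
  have zl: "w * l \<le> \<bar>l\<bar>" if "0 \<le> w" "w \<le> 1" for w l :: real
  proof -
    have "w * l \<le> w * \<bar>l\<bar>" using that by (intro mult_left_mono) auto
    also have "\<dots> \<le> \<bar>l\<bar>" using that by (intro mult_left_le_one_le) auto
    finally show ?thesis .
  qed
  have "ell y th z \<le> \<bar>ln (th / y)\<bar> + \<bar>ln ((1 - th) / (1 - y))\<bar>"
  proof -
    have "z * ln (th / y) \<le> \<bar>ln (th / y)\<bar>" using z zl by simp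
    moreover have "(1 - z) * ln ((1 - th) / (1 - y)) \<le> \<bar>ln ((1 - th) / (1 - y))\<bar>" using z zl by simp
    ultimately show ?thesis unfolding ell_def by simp
  qed
  thus ?thesis unfolding gf_def z_def[symmetric] by simp
qed

context prob_space begin
lemma chernoff:
  assumes "0 < y" "y < 1" "0 < th" "th < 1" "random_variable borel Z"
    "\<And>\<omega>. \<omega> \<in> space M \<Longrightarrow> 0 \<le> Z \<omega> \<and> Z \<omega> \<le> 1" "expectation Z = y"
  shows "expectation (\<lambda>\<omega>. gf y th (Z \<omega>)) \<le> 1"
proof -
  have iZ: "integrable M Z" by (rule integrable_const_bound[where B=1]) (use assms in auto)
  have ig: "integrable M (\<lambda>\<omega>. gf y th (Z \<omega>))"
    by (rule integrable_const_bound[where B="exp (\<bar>ln (th / y)\<bar> + \<bar>ln ((1 - th) / (1 - y))\<bar>)"])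
       (use gf_bound[of y th] assms in \<open>auto intro: measurable_compose[OF _ gf_meas]\<close>)
  have "expectation (\<lambda>\<omega>. gf y th (Z \<omega>)) \<le> expectation (\<lambda>\<omega>. (1 - Z \<omega>) * ((1 - th) / (1 - y)) + Z \<omega> * (th / y))"
    using gf_le assms iZ ig by (intro integral_mono) auto
  also have "\<dots> = (1 - y) * ((1 - th) / (1 - y)) + y * (th / y)"
    using iZ assms by (simp add: algebra_simps prob_space)
  also have "\<dots> = 1" using assms by simp
  finally show ?thesis .
qed
end

lemma Bn_mono: assumes "0 < \<delta>" "\<delta> \<le> 1" "1 \<le> n" "n \<le> n'" shows "Bn \<delta> n \<le> Bn \<delta> n'"
proof -
  have L1: "Lf \<delta> n \<ge> 1" using Lf_ge assms by simp
  have "3 * n * sqrt n \<le> 3 * n' * sqrt n'" using assms by (intro mult_mono) auto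
  hence "3 * n * sqrt n / \<delta> \<le> 3 * n' * sqrt n' / \<delta>" using assms by (simp add: divide_right_mono)
  moreover have "0 < 3 * n * sqrt n / \<delta>" using assms by simp
  ultimately have L: "Lf \<delta> n \<le> Lf \<delta> n'" unfolding Lf_def by simp
  have "ln (1 + Lf \<delta> n / 2) \<le> ln (1 + Lf \<delta> n' / 2)" using L L1 by simp
  moreover have "ln (1 + Lf \<delta> n / 4) \<le> ln (1 + Lf \<delta> n' / 4)" using L L1 by simp
  moreover have "ln (1 + ln n) \<le> ln (1 + ln n')"
  proof -
    have "ln n \<le> ln n'" "ln n \<ge> 0" using assms by auto
    thus ?thesis by simp
  qed
  ultimately show ?thesis unfolding Bn_def using L by linarith
qed

lemma Bn_ge: assumes "0 < \<delta>" "\<delta> \<le> 1" "1 \<le> n" shows "Bn \<delta> n \<ge> 9"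
proof -
  have L1: "Lf \<delta> n \<ge> 1" using Lf_ge assms by simp
  have "ln (1 + Lf \<delta> n / 2) \<ge> 0" "ln (1 + Lf \<delta> n / 4) \<ge> 0" "ln (1 + ln n) \<ge> 0" using L1 assms by auto
  thus ?thesis unfolding Bn_def using L1 by linarith
qed

lemma exp6: "exp (6::real) \<ge> 261.5"
proof -
  have "(261.5::real) \<le> (1 + 6 / real 40) ^ 40" by (simp add: power_divide)
  also have "\<dots> \<le> exp 6" by (rule exp_ge_one_plus_x_over_n_power_n) auto
  finally show ?thesis .
qed

lemma poly_bound: fixes D E :: real assumes "D \<ge> 5/4" "E \<ge> 3/2"
  shows "12 * D + 6 * E - 8 \<le> 7 * (2 * D - 1) * D^2 * E"
proof -
  have "12 * D \<le> 12 * D * ((D / (5/4)) * (E / (3/2)))"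
  proof -
    have "(D / (5/4)) * (E / (3/2)) \<ge> 1 * 1" using assms by (intro mult_mono) auto
    thus ?thesis using assms by (simp add: mult_le_cancel_left1)
  qed
  also have "\<dots> = 32/5 * D^2 * E" by (simp add: power2_eq_square field_simps)
  finally have a: "12 * D \<le> 32/5 * D^2 * E" .
  have "6 * E \<le> 6 * E * (D^2 / (25/16))"
  proof -
    have "D^2 \<ge> (5/4)^2" using assms by (intro power_mono) auto
    hence "D^2 / (25/16) \<ge> 1" by (simp add: power2_eq_square)
    thus ?thesis using assms by (simp add: mult_le_cancel_left1)
  qed
  also have "\<dots> = 96/25 * D^2 * E" by (simp add: field_simps)
  finally have b: "6 * E \<le> 96/25 * D^2 * E" .
  define P where "P = D^2 * E"
  have c: "7 * (2 * D - 1) * P \<ge> 7 * (3/2) * P"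
    using assms unfolding P_def by (intro mult_right_mono) auto
  have a': "12 * D \<le> 32/5 * P" using a unfolding P_def by (simp add: mult.assoc)
  have b': "6 * E \<le> 96/25 * P" using b unfolding P_def by (simp add: mult.assoc)
  have "P \<ge> 0" unfolding P_def using assms by simp
  moreover define T where "T = 7 * (2 * D - 1) * P"
  ultimately have "12 * D + 6 * E - 8 \<le> T" using a' b' c by linarith
  thus ?thesis unfolding T_def P_def by (simp add: mult.assoc)
qed

lemma term_bound:
  fixes s m :: nat
  assumes "0 < \<delta>" "\<delta> \<le> 1" "s \<ge> 1"
  defines "W \<equiv> Bn \<delta> (real s + 2^m)"
  defines "K \<equiv> nat \<lceil>W\<rceil>"
  shows "4 * real K * (real K + 1) * exp (- ((W - 1) * real K / (real K + 1)))
          \<le> \<delta> / (9 * (real s * sqrt (real s)) * (1 + real m / 2)^2)"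
proof -
  define n where "n = real s + 2^m"
  have n1: "n \<ge> 2" using assms unfolding n_def by (smt (verit) of_nat_1 of_nat_mono one_le_power)
  have W9: "W \<ge> 9" unfolding W_def using Bn_ge assms n1 n_def by simp
  have KW: "real K \<ge> W" "real K \<le> W + 1" unfolding K_def using W9 by linarith+
  have cst: "(W - 1) * real K / (real K + 1) \<ge> W - 2"
  proof -
    have "(W - 1) * real K / (real K + 1) = (W - 1) - (W - 1) / (real K + 1)"
      using KW W9 by (simp add: field_simps)
    moreover have "(W - 1) / (real K + 1) \<le> 1" using KW W9 by simp
    ultimately show ?thesis by simp
  qed
  have step1: "4 * real K * (real K + 1) * exp (- ((W - 1) * real K / (real K + 1)))
     \<le> 4 * (W + 1) * (W + 2) * exp (2 - W)"
  proof -
    have "real K * (real K + 1) \<le> (W + 1) * (W + 2)" using KW W9 by (intro mult_mono) auto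
    moreover have "exp (- ((W - 1) * real K / (real K + 1))) \<le> exp (2 - W)" using cst by simp
    ultimately show ?thesis using KW W9
      by (smt (verit, best) exp_gt_zero mult_mono mult_nonneg_nonneg of_nat_0_le_iff mult.assoc)
  qed
  define L where "L = Lf \<delta> n"
  define A where "A = 1 + L/2"
  define D where "D = 1 + L/4"
  define E where "E = 1 + ln n"
  have L1: "L \<ge> 1" unfolding L_def using Lf_ge assms n1 by simp
  have A: "A \<ge> 3/2" unfolding A_def using L1 by simp
  have D: "D \<ge> 5/4" unfolding D_def using L1 by simp
  have E: "E \<ge> 3/2"
  proof -
    have "ln n \<ge> ln 2" using n1 by simp
    thus ?thesis unfolding E_def using ln2_ge by simp
  qed
  have Wd: "W = L + 8 + 2 * ln A + 4 * ln D + 6 * ln E"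
    unfolding W_def Bn_def L_def A_def D_def E_def n_def by simp
  have "W + 2 \<le> 12 * D + 6 * E - 8"
  proof -
    have "ln A \<le> A - 1" "ln D \<le> D - 1" "ln E \<le> E - 1" using A D E by (auto intro: ln_le_minus_one)
    thus ?thesis unfolding Wd using A_def D_def by simp
  qed
  also have "\<dots> \<le> 7 * A * D^2 * E" using poly_bound[OF D E] A_def D_def by simp
  finally have W2: "W + 2 \<le> 7 * A * D^2 * E" .
  have WW: "(W + 1) * (W + 2) \<le> 49 * A^2 * D^4 * E^2"
  proof -
    have "(W + 1) * (W + 2) \<le> (W + 2) * (W + 2)" using W9 by (intro mult_right_mono) auto
    also have "\<dots> \<le> (7 * A * D^2 * E) * (7 * A * D^2 * E)" using W2 W9 A D E by (intro mult_mono) auto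
    also have "\<dots> = 49 * A^2 * D^4 * E^2" by (simp add: power2_eq_square power4_eq_xxxx)
    finally show ?thesis .
  qed
  have eL: "exp (- L) = \<delta> / (3 * n * sqrt n)"
  proof -
    have "exp L = 3 * n * sqrt n / \<delta>" unfolding L_def Lf_def using assms n1 by simp
    thus ?thesis using assms n1 by (simp add: exp_minus)
  qed
  have eW: "exp (- W) = \<delta> / (3 * n * sqrt n) * exp (-8) / (A^2 * D^4 * E^6)"
  proof -
    have "exp (- W) = exp (- L) * exp (-8) / (exp (ln A) ^ 2 * exp (ln D) ^ 4 * exp (ln E) ^ 6)"
      unfolding Wd by (simp add: exp_add exp_diff exp_minus exp_of_nat_mult[symmetric] field_simps)
    thus ?thesis using A D E eL by simp
  qed
  have "4 * (W + 1) * (W + 2) * exp (2 - W) = 4 * exp 2 * ((W + 1) * (W + 2)) * exp (- W)"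
    by (simp add: exp_diff exp_minus field_simps)
  also have "\<dots> \<le> 4 * exp 2 * (49 * A^2 * D^4 * E^2) * exp (- W)"
    using WW by (intro mult_right_mono mult_left_mono) auto
  also have "\<dots> = 196 / 3 * (exp 2 * exp (-8)) * \<delta> / (n * sqrt n * E^4)"
    unfolding eW using A D E n1 by (simp add: field_simps power2_eq_square power4_eq_xxxx eval_nat_numeral)
  also have "exp 2 * exp (-8) = exp (- 6::real)" by (simp add: exp_add[symmetric])
  finally have s2: "4 * (W + 1) * (W + 2) * exp (2 - W) \<le> 196 / 3 * exp (- 6) * \<delta> / (n * sqrt n * E^4)" .
  have nE: "n * sqrt n * E^4 \<ge> (real s * sqrt (real s)) * (9/4 * (1 + real m / 2)^2)"
  proof -
    have "n * sqrt n \<ge> real s * sqrt (real s)" unfolding n_def by (intro mult_mono) auto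
    moreover have "E^4 \<ge> 9/4 * (1 + real m / 2)^2"
    proof -
      have "(2::real)^m \<le> n" "(0::real) < 2^m" unfolding n_def by auto
      hence "ln n \<ge> ln (2^m)" using n1 by (subst ln_le_cancel_iff) auto
      hence "ln n \<ge> real m * ln 2" by (simp add: ln_realpow)
      moreover have "real m * (1/2) \<le> real m * ln 2" using ln2_ge by (intro mult_left_mono) auto
      ultimately have "E \<ge> 1 + real m / 2" unfolding E_def by simp
      hence "E^2 \<ge> (1 + real m / 2)^2" by (intro power_mono) auto
      moreover have "E^2 \<ge> (3/2)^2" using E by (intro power_mono) auto
      ultimately have "E^2 * E^2 \<ge> (3/2)^2 * (1 + real m / 2)^2" by (intro mult_mono) auto
      thus ?thesis by (simp add: power4_eq_xxxx power2_eq_square mult.assoc)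
    qed
    ultimately show ?thesis using assms n1
      by (intro mult_mono[of "real s * sqrt (real s)" "n * sqrt n"]) auto
  qed
  have pos: "real s * sqrt (real s) * (1 + real m / 2)^2 > 0" using assms by simp
  have "196 / 3 * exp (- 6) * \<delta> / (n * sqrt n * E^4) \<le> 196 / 3 * exp (- 6) * \<delta> / ((real s * sqrt (real s)) * (9/4 * (1 + real m / 2)^2))"
  proof (rule divide_left_mono)
    show "real s * sqrt (real s) * (9 / 4 * (1 + real m / 2)\<^sup>2) \<le> n * sqrt n * E ^ 4" using nE .
    show "0 \<le> 196 / 3 * exp (- 6) * \<delta>" using assms by simp
    show "0 < n * sqrt n * E ^ 4 * (real s * sqrt (real s) * (9 / 4 * (1 + real m / 2)\<^sup>2))"
      using pos n1 E assms by (intro mult_pos_pos) auto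
  qed
  also have "\<dots> \<le> \<delta> / (9 * (real s * sqrt (real s)) * (1 + real m / 2)^2)"
  proof -
    have "exp (- 6::real) \<le> 1 / 261.5" using exp6 by (simp add: exp_minus field_simps)
    hence "196 / 3 * exp (- 6::real) / (9/4) \<le> 1 / 9" by simp
    thus ?thesis using pos assms by (simp add: field_simps)
  qed
  finally show ?thesis using step1 s2 by linarith
qed

lemma tele_bound:
  fixes a g :: "nat \<Rightarrow> real"
  assumes "\<And>m. 0 \<le> a (Suc m)" "\<And>m. a (Suc m) \<le> g m - g (Suc m)" "g \<longlonglongrightarrow> 0"
  shows "summable a \<and> suminf a \<le> a 0 + g 0"
proof -
  have t: "(\<lambda>m. g m - g (Suc m)) sums (g 0 - 0)" by (rule telescope_sums'[OF assms(3)])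
  have s1: "summable (\<lambda>m. a (Suc m))"
    by (rule summable_comparison_test'[OF sums_summable[OF t], of 0]) (use assms in auto)
  have "(\<Sum>m. a (Suc m)) \<le> (\<Sum>m. g m - g (Suc m))"
    by (rule suminf_le) (use assms s1 sums_summable[OF t] in auto)
  also have "\<dots> = g 0" using t by (simp add: sums_iff)
  finally have le: "(\<Sum>m. a (Suc m)) \<le> g 0" .
  have s: "summable a" using s1 summable_Suc_iff by blast
  have "suminf a = a 0 + (\<Sum>m. a (Suc m))" using suminf_split_head[OF s] by simp
  thus ?thesis using s le by simp
qed

lemma sumA: "summable (\<lambda>m::nat. 1 / (1 + real m / 2)^2) \<and> (\<Sum>m. 1 / (1 + real m / 2)^2) \<le> 3"
proof -
  have "summable (\<lambda>m::nat. 1 / (1 + real m / 2)^2) \<and> (\<Sum>m. 1 / (1 + real m / 2)^2) \<le> 1 / (1 + real 0 / 2)^2 + 2 / (1 + real 0 / 2)"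
  proof (rule tele_bound)
    show "((\<lambda>m::nat. 2 / (1 + real m / 2)) \<longlongrightarrow> 0) sequentially" by real_asymp
    fix m :: nat
    show "0 \<le> 1 / (1 + real (Suc m) / 2)^2" by simp
    define u where "u = 1 + real m / 2"
    have u: "u \<ge> 1" unfolding u_def by simp
    have e1: "1 + real (Suc m) / 2 = u + 1/2" unfolding u_def by (simp add: field_simps)
    have "1 / (u + 1/2)^2 \<le> 1 / (u * (u + 1/2))"
      using u by (intro divide_left_mono) (auto simp: power2_eq_square intro!: mult_right_mono)
    also have "\<dots> = 2 / u - 2 / (u + 1/2)" using u by (simp add: field_simps)
    finally show "1 / (1 + real (Suc m) / 2)^2 \<le> 2 / (1 + real m / 2) - 2 / (1 + real (Suc m) / 2)"
      unfolding e1 u_def[symmetric] .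
  qed
  thus ?thesis by simp
qed

lemma sqrt_step: assumes "k \<ge> (1::real)"
  shows "1 / ((k + 1) * sqrt (k + 1)) \<le> 2 / sqrt k - 2 / sqrt (k + 1)"
proof -
  define p where "p = sqrt k"
  define q where "q = sqrt (k + 1)"
  have p: "p \<ge> 1" "p^2 = k" unfolding p_def using assms by auto
  have q: "q > 0" "q^2 = k + 1" "p \<le> q" unfolding q_def p_def using assms by auto
  have qp: "(q - p) * (q + p) = 1" using p q by (simp add: algebra_simps power2_eq_square)
  have "2 / p - 2 / q = 2 * (q - p) / (p * q)" using p q by (simp add: field_simps)
  also have "\<dots> = 2 / (p * q * (q + p))"
  proof -
    have "q + p > 0" using p q by simp
    hence "q - p = 1 / (q + p)" using qp by (simp add: eq_divide_eq)
    thus ?thesis by simp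
  qed
  finally have e: "2 / p - 2 / q = 2 / (p * q * (q + p))" .
  have "p * q * (q + p) \<le> q * q * (q + q)" using p q by (intro mult_mono) auto
  hence a1: "2 / (q * q * (q + q)) \<le> 2 / (p * q * (q + p))" using p q
    by (intro divide_left_mono) auto
  have a2: "2 / (q * q * (q + q)) = 1 / ((k + 1) * q)"
  proof -
    have "q * q * (q + q) = 2 * (q^2 * q)" by (simp add: power2_eq_square)
    hence "q * q * (q + q) = 2 * ((k + 1) * q)" using q(2) by simp
    hence "2 / (q * q * (q + q)) = 2 / (2 * ((k + 1) * q))" by (rule arg_cong)
    thus ?thesis by simp
  qed
  have fin: "1 / ((k + 1) * q) \<le> 2 / p - 2 / q" using e a1 a2 by linarith
  thus ?thesis unfolding p_def q_def .
qed

lemma sumB: "summable (\<lambda>s::nat. 1 / (real (Suc s) * sqrt (real (Suc s)))) \<and> (\<Sum>s. 1 / (real (Suc s) * sqrt (real (Suc s)))) \<le> 3"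
proof -
  have "summable (\<lambda>s::nat. 1 / (real (Suc s) * sqrt (real (Suc s)))) \<and> (\<Sum>s. 1 / (real (Suc s) * sqrt (real (Suc s)))) \<le> 1 / (real (Suc 0) * sqrt (real (Suc 0))) + 2 / sqrt (real 0 + 1)"
  proof (rule tele_bound)
    show "((\<lambda>s::nat. 2 / sqrt (real s + 1)) \<longlongrightarrow> 0) sequentially" by real_asymp
    fix m :: nat
    show "0 \<le> 1 / (real (Suc (Suc m)) * sqrt (real (Suc (Suc m))))" by simp
    show "1 / (real (Suc (Suc m)) * sqrt (real (Suc (Suc m)))) \<le> 2 / sqrt (real m + 1) - 2 / sqrt (real (Suc m) + 1)"
      using sqrt_step[of "real m + 1"] by (simp add: add.commute)
  qed
  thus ?thesis by simp
qed

definition ff :: "real \<Rightarrow> nat \<Rightarrow> real \<Rightarrow> real \<Rightarrow> nat \<Rightarrow> real \<Rightarrow> real" where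
  "ff y s th1 th2 t x = (if t \<le> s then gf y th1 x else gf y th2 x)"
definition Wd :: "real \<Rightarrow> nat \<Rightarrow> nat \<Rightarrow> real" where
  "Wd \<delta> s m = Bn \<delta> (real s + 2^m)"
definition Kd :: "real \<Rightarrow> nat \<Rightarrow> nat \<Rightarrow> nat" where
  "Kd \<delta> s m = nat \<lceil>Wd \<delta> s m\<rceil>"
definition Rd :: "real \<Rightarrow> nat \<Rightarrow> nat \<Rightarrow> nat \<Rightarrow> real" where
  "Rd \<delta> s m j = 2^m * (1 + real j / real (Kd \<delta> s m))"
definition cst :: "real \<Rightarrow> nat \<Rightarrow> nat \<Rightarrow> real" where
  "cst \<delta> s m = (Wd \<delta> s m - 1) * real (Kd \<delta> s m) / (real (Kd \<delta> s m) + 1)"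
definition th1 :: "real \<Rightarrow> nat \<Rightarrow> nat \<Rightarrow> bool \<Rightarrow> real" where
  "th1 y s i b1 = thc y (real i / real s) b1"
definition th2 :: "real \<Rightarrow> real \<Rightarrow> nat \<Rightarrow> nat \<Rightarrow> nat \<Rightarrow> nat \<Rightarrow> bool \<Rightarrow> real" where
  "th2 y \<delta> s m j i b2 = thc y (max 0 (Wd \<delta> s m - real i - 1) / Rd \<delta> s m (Suc j)) b2"
definition fp :: "real \<Rightarrow> real \<Rightarrow> nat \<Rightarrow> nat \<Rightarrow> nat \<Rightarrow> nat \<Rightarrow> bool \<Rightarrow> bool \<Rightarrow> nat \<Rightarrow> real \<Rightarrow> real" where
  "fp y \<delta> s m j i b1 b2 = ff y s (th1 y s i b1) (th2 y \<delta> s m j i b2)"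

lemma pyth: assumes "0 < s" "0 < r" "0 \<le> a" "a \<le> 1" "0 \<le> b" "b \<le> 1" "0 < y" "y < 1"
  shows "s * kl a ((s * a + r * b) / (s + r)) + r * kl b ((s * a + r * b) / (s + r)) \<le> s * kl a y + r * kl b y"
proof -
  define mm where "mm = (s * a + r * b) / (s + r)"
  have ka: "kl a y \<ge> 0" and kb: "kl b y \<ge> 0" using kl_nonneg assms by auto
  have sa: "0 \<le> s * a" "s * a \<le> s" using assms by (auto intro: mult_right_le_one_le)
  have rb: "0 \<le> r * b" "r * b \<le> r" using assms by (auto intro: mult_right_le_one_le)
  have le: "s * a + r * b \<le> s + r" "0 \<le> s * a + r * b" using sa rb by linarith+
  have mm0: "0 \<le> mm" "mm \<le> 1" unfolding mm_def using assms le by (auto simp: divide_le_eq_1)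
  show ?thesis
  proof (cases "mm = 0 \<or> mm = 1")
    case True
    have "a = mm \<and> b = mm"
    proof (cases "mm = 0")
      case True
      hence "s * a + r * b = 0" unfolding mm_def using assms by (simp add: divide_eq_0_iff)
      hence "s * a = 0 \<and> r * b = 0" using sa rb by linarith
      hence "a = 0 \<and> b = 0" using assms by simp
      thus ?thesis using True by simp
    next
      case False
      hence m1: "mm = 1" using \<open>mm = 0 \<or> mm = 1\<close> by simp
      hence "s * a + r * b = s + r" unfolding mm_def using assms by (simp add: divide_eq_1_iff)
      hence "s * (1 - a) + r * (1 - b) = 0" by (simp add: algebra_simps)
      moreover have "s * (1 - a) \<ge> 0" "r * (1 - b) \<ge> 0" using assms by auto
      ultimately have "s * (1 - a) = 0 \<and> r * (1 - b) = 0" by linarith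
      hence "1 - a = 0 \<and> 1 - b = 0" using assms by simp
      thus ?thesis using m1 by simp
    qed
    hence "kl a mm = 0" "kl b mm = 0" using kl_self mm0 by auto
    thus ?thesis unfolding mm_def[symmetric] using ka kb assms by simp
  next
    case False
    hence m: "0 < mm" "mm < 1" using mm0 by auto
    have da: "kl a y = ell y mm a + kl a mm" using kl_decomp[of a y mm] assms m by simp
    have db: "kl b y = ell y mm b + kl b mm" using kl_decomp[of b y mm] assms m by simp
    define C where "C = ln ((1 - mm) / (1 - y))"
    define D where "D = ln (mm / y) - ln ((1 - mm) / (1 - y))"
    have mmsr: "mm * (s + r) = s * a + r * b" unfolding mm_def using assms by simp
    have "s * ell y mm a + r * ell y mm b = s * (C + a * D) + r * (C + b * D)"
      unfolding ell_affine C_def D_def ..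
    also have "\<dots> = (s + r) * C + (s * a + r * b) * D" by (simp add: algebra_simps)
    also have "\<dots> = (s + r) * (C + mm * D)" unfolding mmsr[symmetric] by (simp add: algebra_simps)
    also have "\<dots> = (s + r) * ell y mm mm" unfolding ell_affine C_def D_def ..
    finally have "s * ell y mm a + r * ell y mm b = (s + r) * ell y mm mm" .
    also have "\<dots> = (s + r) * kl mm y" using ell_self[of y mm] assms m by simp
    also have "\<dots> \<ge> 0" using kl_nonneg[of mm y] mm0 assms by simp
    finally have "s * ell y mm a + r * ell y mm b \<ge> 0" .
    thus ?thesis unfolding mm_def[symmetric] using da db by (simp add: algebra_simps)
  qed
qed

lemma sum_ell: assumes "finite A" "card A > 0"
  shows "(\<Sum>t\<in>A. ell y th (x t)) = real (card A) * ell y th ((\<Sum>t\<in>A. x t) / real (card A))"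
proof -
  define C where "C = ln ((1 - th) / (1 - y))"
  define D where "D = ln (th / y) - ln ((1 - th) / (1 - y))"
  have "(\<Sum>t\<in>A. ell y th (x t)) = (\<Sum>t\<in>A. C + x t * D)" unfolding ell_affine C_def D_def ..
  also have "\<dots> = real (card A) * C + (\<Sum>t\<in>A. x t) * D" by (simp add: sum.distrib sum_distrib_right)
  also have "\<dots> = real (card A) * (C + ((\<Sum>t\<in>A. x t) / real (card A)) * D)" using assms by (simp add: field_simps)
  also have "\<dots> = real (card A) * ell y th ((\<Sum>t\<in>A. x t) / real (card A))" unfolding ell_affine C_def D_def ..
  finally show ?thesis .
qed

lemma gf_exp: "0 \<le> x \<Longrightarrow> x \<le> 1 \<Longrightarrow> gf y th x = exp (ell y th x)"
  unfolding gf_def by simp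

lemma Pp_ff: assumes "s \<le> n" "\<And>t. 1 \<le> t \<Longrightarrow> t \<le> n \<Longrightarrow> 0 \<le> x t \<and> x t \<le> 1"
  shows "Pp (ff y s ta tb) x n = exp ((\<Sum>t\<in>{1..s}. ell y ta (x t)) + (\<Sum>t\<in>{s+1..n}. ell y tb (x t)))"
proof -
  have u: "{1..n} = {1..s} \<union> {s+1..n}" "{1..s} \<inter> {s+1..n} = {}" using assms by auto
  have "Pp (ff y s ta tb) x n = (\<Prod>t\<in>{1..s}. ff y s ta tb t (x t)) * (\<Prod>t\<in>{s+1..n}. ff y s ta tb t (x t))"
    unfolding Pp_def u(1) by (rule prod.union_disjoint) (use u in auto)
  also have "(\<Prod>t\<in>{1..s}. ff y s ta tb t (x t)) = (\<Prod>t\<in>{1..s}. exp (ell y ta (x t)))"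
    using assms by (intro prod.cong) (auto simp: ff_def gf_exp)
  also have "(\<Prod>t\<in>{s+1..n}. ff y s ta tb t (x t)) = (\<Prod>t\<in>{s+1..n}. exp (ell y tb (x t)))"
    using assms by (intro prod.cong) (auto simp: ff_def gf_exp)
  finally show ?thesis by (simp add: exp_sum exp_add)
qed

lemma det_core:
  assumes y: "0 < y" "y < 1" and d: "0 < \<delta>" "\<delta> \<le> 1"
    and x: "\<And>t. t \<ge> 1 \<Longrightarrow> 0 \<le> x t \<and> x t \<le> 1"
    and s: "1 \<le> s" "s < n"
    and G: "real s * kl ((\<Sum>t\<in>{1..s}. x t) / real s) y
          + real (n - s) * kl ((\<Sum>t\<in>{s+1..n}. x t) / real (n - s)) y \<ge> Bn \<delta> (real n)"
  shows "\<exists>m j i b1 b2. j < Kd \<delta> s m \<and> i \<le> Kd \<delta> s m \<and>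
           cr (fp y \<delta> s m j i b1 b2) (exp (cst \<delta> s m)) x (s + 2^Suc m)"
proof -
  define r where "r = n - s"
  have r1: "r \<ge> 1" and nsr: "n = s + r" using s unfolding r_def by auto
  define a where "a = (\<Sum>t\<in>{1..s}. x t) / real s"
  define b where "b = (\<Sum>t\<in>{s+1..n}. x t) / real r"
  have a01: "0 \<le> a" "a \<le> 1"
  proof -
    have "(\<Sum>t\<in>{1..s}. x t) \<le> (\<Sum>t\<in>{1..s}. 1)" using x by (intro sum_mono) auto
    moreover have "(\<Sum>t\<in>{1..s}. x t) \<ge> 0" using x by (intro sum_nonneg) auto
    ultimately show "0 \<le> a" "a \<le> 1" unfolding a_def using s by auto
  qed
  have b01: "0 \<le> b" "b \<le> 1"
  proof -
    have "(\<Sum>t\<in>{s+1..n}. x t) \<le> (\<Sum>t\<in>{s+1..n}. 1)" using x by (intro sum_mono) auto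
    moreover have "(\<Sum>t\<in>{s+1..n}. x t) \<ge> 0" using x by (intro sum_nonneg) auto
    ultimately show "0 \<le> b" "b \<le> 1" unfolding b_def using s r1 nsr by auto
  qed
  obtain m where m: "2^m \<le> r" "r < 2^(m+1)" using ex_power_ivl1[of 2 r] r1 by auto
  have mr: "(2::real)^m \<le> real r" "real r < 2^(m+1)"
    using m by (metis of_nat_le_iff of_nat_numeral of_nat_power, metis of_nat_less_iff of_nat_numeral of_nat_power)
  define W where "W = Wd \<delta> s m"
  define K where "K = Kd \<delta> s m"
  have "(0::real) \<le> 2^m" by simp
  hence "(1::real) \<le> real s + 2^m" using s by linarith
  hence W9: "W \<ge> 9" unfolding W_def Wd_def using Bn_ge d by simp
  have KW: "real K \<ge> W" "real K \<le> W + 1" unfolding K_def Kd_def W_def[symmetric] using W9 by linarith+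
  have K1: "real K \<ge> 1" using KW W9 by simp
  have WB: "W \<le> Bn \<delta> (real n)" unfolding W_def Wd_def
    using Bn_mono[of \<delta> "real s + 2^m" "real n"] d s mr nsr by simp
  define u where "u = real s * kl a y"
  define v where "v = real r * kl b y"
  have u0: "u \<ge> 0" unfolding u_def using kl_nonneg a01 y by simp
  have v0: "v \<ge> 0" unfolding v_def using kl_nonneg b01 y by simp
  have uv: "u + v \<ge> W" using G WB unfolding u_def v_def a_def b_def r_def by simp
  define tt where "tt = (real r / 2^m - 1) * real K"
  have tt: "0 \<le> tt" "tt < real K"
  proof -
    have "real r / 2^m \<ge> 1" "real r / 2^m < 2" using mr by (auto simp: field_simps)
    thus "0 \<le> tt" "tt < real K" unfolding tt_def using K1 by auto
  qed
  define j where "j = nat \<lfloor>tt\<rfloor>"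
  have j: "real j \<le> tt" "tt < real j + 1" unfolding j_def using tt by linarith+
  have jK: "j < K" using j tt by linarith
  have Rj: "Rd \<delta> s m j \<le> real r"
  proof -
    have "Rd \<delta> s m j = 2^m * (1 + real j / real K)" unfolding Rd_def K_def ..
    also have "\<dots> \<le> 2^m * (1 + tt / real K)" using j K1 by (intro mult_left_mono) (auto simp: divide_right_mono)
    also have "\<dots> = real r" unfolding tt_def using K1 by (simp add: field_simps)
    finally show ?thesis .
  qed
  have Rj1: "real r < Rd \<delta> s m (Suc j)"
  proof -
    have "real r = 2^m * (1 + tt / real K)" unfolding tt_def using K1 by (simp add: field_simps)
    also have "\<dots> < 2^m * (1 + real (Suc j) / real K)" using j K1 by (intro mult_strict_left_mono) (auto simp: divide_strict_right_mono)
    also have "\<dots> = Rd \<delta> s m (Suc j)" unfolding Rd_def K_def ..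
    finally show ?thesis .
  qed
  have Rpos: "Rd \<delta> s m j > 0" unfolding Rd_def by (simp add: add_pos_nonneg)
  have ratio: "Rd \<delta> s m j * (real K + 1) \<ge> Rd \<delta> s m (Suc j) * real K"
  proof -
    have "(1 + real j / real K) * (real K + 1) \<ge> (1 + real (Suc j) / real K) * real K"
      using K1 by (simp add: field_simps)
    thus ?thesis unfolding Rd_def K_def[symmetric] by (simp add: mult.assoc mult_left_mono)
  qed
  define i where "i = (if u > real K then K else nat \<lceil>u\<rceil> - 1)"
  have iK: "i \<le> K" unfolding i_def using u0 by (auto, linarith)
  have i1: "i = 0 \<or> real i < u" unfolding i_def using u0 by (auto, linarith)
  have i2: "u > real K \<and> i = K \<or> u \<le> real i + 1" unfolding i_def using u0 by (auto, linarith)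
  define b1 where "b1 = (y \<le> a)"
  define b2 where "b2 = (y \<le> b)"
  define ta where "ta = th1 y s i b1"
  define w where "w = W - real i - 1"
  define q where "q = max 0 w / Rd \<delta> s m (Suc j)"
  define tb where "tb = th2 y \<delta> s m j i b2"
  have Rpos1: "Rd \<delta> s m (Suc j) > 0" using Rj1 r1 by simp
  have left: "real s * ell y ta a \<ge> real i"
  proof -
    have "real i / real s = 0 \<or> real i / real s < kl a y"
      using i1 s unfolding u_def by (auto simp: field_simps)
    hence "ell y ta a \<ge> real i / real s" unfolding ta_def th1_def b1_def
      using thc_ell[of y a "real i / real s"] y a01 by simp
    thus ?thesis using s by (simp add: field_simps)
  qed
  have q0: "q \<ge> 0" unfolding q_def using Rpos1 by simp
  have right: "real r * ell y tb b \<ge> max 0 w * real K / (real K + 1)"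
  proof -
    have "q = 0 \<or> q < kl b y"
    proof (cases "w > 0")
      case False thus ?thesis unfolding q_def by simp
    next
      case True
      have "u \<le> real i + 1" using i2 True KW unfolding w_def by auto
      hence "v \<ge> w" using uv unfolding w_def by simp
      hence "kl b y \<ge> w / real r" unfolding v_def using r1 by (simp add: field_simps)
      moreover have "w / Rd \<delta> s m (Suc j) < w / real r" using True Rj1 r1 by (intro divide_strict_left_mono) auto
      ultimately show ?thesis unfolding q_def using True by simp
    qed
    hence "ell y tb b \<ge> q" unfolding tb_def th2_def b2_def q_def[symmetric] w_def[symmetric] W_def[symmetric]
      using thc_ell[of y b q] y b01 q0 by simp
    hence "real r * ell y tb b \<ge> real r * q" using r1 by (simp add: mult_left_mono)
    moreover have "real r * q \<ge> Rd \<delta> s m j * q" using Rj q0 by (simp add: mult_right_mono)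
    moreover have "Rd \<delta> s m j * q \<ge> max 0 w * real K / (real K + 1)"
    proof -
      have "Rd \<delta> s m j * q = max 0 w * (Rd \<delta> s m j / Rd \<delta> s m (Suc j))" unfolding q_def by simp
      moreover have "Rd \<delta> s m j / Rd \<delta> s m (Suc j) \<ge> real K / (real K + 1)"
        using ratio Rpos1 K1 by (simp add: field_simps)
      hence "max 0 w * (real K / (real K + 1)) \<le> max 0 w * (Rd \<delta> s m j / Rd \<delta> s m (Suc j))"
        by (intro mult_left_mono) auto
      ultimately show ?thesis by simp
    qed
    ultimately show ?thesis by linarith
  qed
  have total: "real s * ell y ta a + real r * ell y tb b \<ge> cst \<delta> s m"
  proof -
    have c: "cst \<delta> s m = (W - 1) * real K / (real K + 1)" unfolding cst_def W_def K_def ..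
    show ?thesis
    proof (cases "w \<ge> 0")
      case True
      have mw: "max 0 w = w" using True by simp
      have num: "real i * (real K + 1) + w * real K = (W - 1) * real K + real i" unfolding w_def by (simp add: algebra_simps)
      have "real i + max 0 w * real K / (real K + 1) = (real i * (real K + 1) + w * real K) / (real K + 1)"
        unfolding mw using K1 by (simp add: add_divide_distrib)
      also have "\<dots> = ((W - 1) * real K + real i) / (real K + 1)" unfolding num ..
      also have "\<dots> = (W - 1) * real K / (real K + 1) + real i / (real K + 1)" by (simp add: add_divide_distrib)
      finally have "real i + max 0 w * real K / (real K + 1) = (W - 1) * real K / (real K + 1) + real i / (real K + 1)" .
      moreover have "real i / (real K + 1) \<ge> 0" by simp
      ultimately show ?thesis using left right c by linarith
    next
      case False
      have "(W - 1) * real K / (real K + 1) \<le> W - 1" using W9 K1 by (simp add: field_simps)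
      hence "cst \<delta> s m \<le> real i" using False c unfolding w_def by simp
      moreover have "real r * ell y tb b \<ge> 0" using right K1 by (smt (verit) divide_nonneg_nonneg max.cobounded1 mult_nonneg_nonneg of_nat_0_le_iff)
      ultimately show ?thesis using left by linarith
    qed
  qed
  have Pp_eq: "Pp (fp y \<delta> s m j i b1 b2) x n = exp (real s * ell y ta a + real r * ell y tb b)"
  proof -
    have "Pp (fp y \<delta> s m j i b1 b2) x n = exp ((\<Sum>t\<in>{1..s}. ell y ta (x t)) + (\<Sum>t\<in>{s+1..n}. ell y tb (x t)))"
      unfolding fp_def ta_def[symmetric] tb_def[symmetric] using s x by (intro Pp_ff) auto
    also have "(\<Sum>t\<in>{1..s}. ell y ta (x t)) = real s * ell y ta a"
      using sum_ell[of "{1..s}" y ta x] s unfolding a_def by simp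
    also have "(\<Sum>t\<in>{s+1..n}. ell y tb (x t)) = real r * ell y tb b"
      using sum_ell[of "{s+1..n}" y tb x] s r1 nsr unfolding b_def by simp
    finally show ?thesis .
  qed
  have "exp (cst \<delta> s m) \<le> Pp (fp y \<delta> s m j i b1 b2) x n" unfolding Pp_eq using total by simp
  moreover have "n \<le> s + 2^Suc m" using m nsr by simp
  ultimately have "cr (fp y \<delta> s m j i b1 b2) (exp (cst \<delta> s m)) x (s + 2^Suc m)" unfolding cr_def by blast
  thus ?thesis using jK iK unfolding K_def by blast
qed

lemma glr_unfold: "glr_tau X \<delta> \<omega> < \<infinity> \<Longrightarrow> \<exists>n\<ge>2. beta_thr n \<delta> \<le> glr_stat X n \<omega>"
proof (rule ccontr)
  assume a: "glr_tau X \<delta> \<omega> < \<infinity>" "\<not> (\<exists>n\<ge>2. beta_thr n \<delta> \<le> glr_stat X n \<omega>)"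
  hence e: "{n. n \<ge> 2 \<and> glr_stat X n \<omega> \<ge> beta_thr n \<delta>} = {}" by auto
  have "glr_tau X \<delta> \<omega> = (INF n\<in>{}. enat n)" unfolding glr_tau_def e ..
  hence "glr_tau X \<delta> \<omega> = \<infinity>" by (simp add: top_enat_def)
  thus False using a by simp
qed

lemma glr_max: assumes "n \<ge> 2" "glr_stat X n \<omega> \<ge> c"
  shows "\<exists>s\<in>{1..<n}. real s * kl (emp_mean X 1 s \<omega>) (emp_mean X 1 n \<omega>)
        + real (n - s) * kl (emp_mean X (s+1) n \<omega>) (emp_mean X 1 n \<omega>) \<ge> c"
proof -
  let ?f = "\<lambda>s. real s * kl (emp_mean X 1 s \<omega>) (emp_mean X 1 n \<omega>)
        + real (n - s) * kl (emp_mean X (s+1) n \<omega>) (emp_mean X 1 n \<omega>)"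
  have "Max (?f ` {1..<n}) \<in> ?f ` {1..<n}" using assms by (intro Max_in) auto
  then obtain s where "s \<in> {1..<n}" "glr_stat X n \<omega> = ?f s" unfolding glr_stat_def by auto
  thus ?thesis using assms by auto
qed

lemma emp_split: assumes "1 \<le> s" "s < n"
  shows "emp_mean X 1 s \<omega> = (\<Sum>t\<in>{1..s}. X t \<omega>) / real s"
    "emp_mean X (s+1) n \<omega> = (\<Sum>t\<in>{s+1..n}. X t \<omega>) / real (n - s)"
    "emp_mean X 1 n \<omega> = (real s * emp_mean X 1 s \<omega> + real (n - s) * emp_mean X (s+1) n \<omega>) / (real s + real (n - s))"
proof -
  show e1: "emp_mean X 1 s \<omega> = (\<Sum>t\<in>{1..s}. X t \<omega>) / real s" unfolding emp_mean_def by simp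
  show e2: "emp_mean X (s+1) n \<omega> = (\<Sum>t\<in>{s+1..n}. X t \<omega>) / real (n - s)"
    unfolding emp_mean_def using assms by (simp add: of_nat_diff)
  have u: "{1..n} = {1..s} \<union> {s+1..n}" "{1..s} \<inter> {s+1..n} = {}" using assms by auto
  have "(\<Sum>t\<in>{1..n}. X t \<omega>) = (\<Sum>t\<in>{1..s}. X t \<omega>) + (\<Sum>t\<in>{s+1..n}. X t \<omega>)"
    unfolding u(1) by (rule sum.union_disjoint) (use u in auto)
  moreover have "real s + real (n - s) = real n" using assms by (simp add: of_nat_diff)
  ultimately show "emp_mean X 1 n \<omega> = (real s * emp_mean X 1 s \<omega> + real (n - s) * emp_mean X (s+1) n \<omega>) / (real s + real (n - s))"
    unfolding e1 e2 using assms unfolding emp_mean_def by simp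
qed

lemma emp_const: assumes "\<And>t. t \<ge> 1 \<Longrightarrow> X t \<omega> = c" "1 \<le> k" "k \<le> k'"
  shows "emp_mean X k k' \<omega> = c"
proof -
  have "(\<Sum>j = k..k'. X j \<omega>) = (\<Sum>j = k..k'. c)" using assms by (intro sum.cong) auto
  also have "\<dots> = real (k' + 1 - k) * c" by simp
  moreover have "real k' - real k + 1 > 0" using assms by simp
  ultimately show ?thesis unfolding emp_mean_def using assms by (simp add: of_nat_diff field_simps)
qed

lemma glr_const: assumes "\<And>t. t \<ge> 1 \<Longrightarrow> X t \<omega> = c" "0 \<le> c" "c \<le> 1" "n \<ge> 2"
  shows "glr_stat X n \<omega> = 0"
proof -
  have "\<And>s. s \<in> {1..<n} \<Longrightarrow> real s * kl (emp_mean X 1 s \<omega>) (emp_mean X 1 n \<omega>)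
        + real (n - s) * kl (emp_mean X (s+1) n \<omega>) (emp_mean X 1 n \<omega>) = 0"
    using emp_const[of X \<omega> c] assms(1) kl_self[of c] assms by auto
  hence "(\<lambda>s. real s * kl (emp_mean X 1 s \<omega>) (emp_mean X 1 n \<omega>)
        + real (n - s) * kl (emp_mean X (s+1) n \<omega>) (emp_mean X 1 n \<omega>)) ` {1..<n} = {0}"
    using assms by force
  thus ?thesis unfolding glr_stat_def by simp
qed

definition Ev :: "'a measure \<Rightarrow> (nat \<Rightarrow> 'a \<Rightarrow> real) \<Rightarrow> real \<Rightarrow> real \<Rightarrow> nat \<Rightarrow> nat \<Rightarrow> nat \<times> nat \<times> bool \<times> bool \<Rightarrow> 'a set" where
  "Ev M X y \<delta> s m p = (case p of (j, i, b1, b2) \<Rightarrow>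
     {\<omega> \<in> space M. cr (fp y \<delta> s m j i b1 b2) (exp (cst \<delta> s m)) (\<lambda>t. X t \<omega>) (s + 2^Suc m)})"
definition Pset :: "real \<Rightarrow> nat \<Rightarrow> nat \<Rightarrow> (nat \<times> nat \<times> bool \<times> bool) set" where
  "Pset \<delta> s m = {..<Kd \<delta> s m} \<times> {..Kd \<delta> s m} \<times> UNIV \<times> UNIV"
definition Fs :: "'a measure \<Rightarrow> (nat \<Rightarrow> 'a \<Rightarrow> real) \<Rightarrow> real \<Rightarrow> real \<Rightarrow> nat \<Rightarrow> nat \<Rightarrow> 'a set" where
  "Fs M X y \<delta> s m = (\<Union>p\<in>Pset \<delta> s m. Ev M X y \<delta> s m p)"
definition Gs :: "'a measure \<Rightarrow> (nat \<Rightarrow> 'a \<Rightarrow> real) \<Rightarrow> real \<Rightarrow> real \<Rightarrow> nat \<Rightarrow> 'a set" where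
  "Gs M X y \<delta> s' = (\<Union>m. Fs M X y \<delta> (Suc s') m)"

lemma fp_meas: "fp y \<delta> s m j i b1 b2 t \<in> borel_measurable borel"
  unfolding fp_def ff_def by (cases "t \<le> s") (auto simp: gf_meas)

context prob_space begin

lemma ev_sets: assumes ind: "indep_vars (\<lambda>_. borel) X {1..}"
  shows "Ev M X y \<delta> s m p \<in> sets M"
proof -
  obtain j i b1 b2 where p: "p = (j, i, b1, b2)" by (cases p) auto
  have "{\<omega> \<in> space M. cr (fp y \<delta> s m j i b1 b2) (exp (cst \<delta> s m)) (\<lambda>t. X t \<omega>) (s + 2^Suc m)} \<in> sets M"
    by (rule meas_cr) (use ind fp_meas in \<open>auto simp: indep_vars_def\<close>)
  thus ?thesis unfolding Ev_def p by simp
qed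

lemma ev_bound:
  assumes ind: "indep_vars (\<lambda>_. borel) X {1..}"
    and bnd: "\<And>t \<omega>. t \<ge> 1 \<Longrightarrow> \<omega> \<in> space M \<Longrightarrow> 0 \<le> X t \<omega> \<and> X t \<omega> \<le> 1"
    and E: "\<And>t. t \<ge> 1 \<Longrightarrow> expectation (X t) = y"
    and y: "0 < y" "y < 1"
  shows "prob (Ev M X y \<delta> s m p) \<le> exp (- cst \<delta> s m)"
proof -
  obtain j i b1 b2 where p: "p = (j, i, b1, b2)" by (cases p) auto
  define ta where "ta = th1 y s i b1"
  define tb where "tb = th2 y \<delta> s m j i b2"
  have ta: "0 < ta" "ta < 1" unfolding ta_def th1_def using thc_range y by auto
  have tb: "0 < tb" "tb < 1" unfolding tb_def th2_def using thc_range y by auto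
  define Bd where "Bd = max (exp (\<bar>ln (ta / y)\<bar> + \<bar>ln ((1 - ta) / (1 - y))\<bar>)) (exp (\<bar>ln (tb / y)\<bar> + \<bar>ln ((1 - tb) / (1 - y))\<bar>))"
  have ffe: "fp y \<delta> s m j i b1 b2 = ff y s ta tb" unfolding fp_def ta_def tb_def ..
  have fb: "0 \<le> fp y \<delta> s m j i b1 b2 t x \<and> fp y \<delta> s m j i b1 b2 t x \<le> Bd" for t x
    unfolding ffe ff_def Bd_def using gf_bound[of y ta x] gf_bound[of y tb x] by auto
  have Xm: "random_variable borel (X t)" if "t \<ge> 1" for t using ind that unfolding indep_vars_def by auto
  have fi: "expectation (\<lambda>\<omega>. fp y \<delta> s m j i b1 b2 t (X t \<omega>)) \<le> 1" if "t \<ge> 1" for t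
  proof (cases "t \<le> s")
    case True
    hence "expectation (\<lambda>\<omega>. fp y \<delta> s m j i b1 b2 t (X t \<omega>)) = expectation (\<lambda>\<omega>. gf y ta (X t \<omega>))"
      unfolding ffe ff_def by simp
    also have "\<dots> \<le> 1" by (rule chernoff) (use y ta Xm[OF that] bnd that E in auto)
    finally show ?thesis .
  next
    case False
    hence "expectation (\<lambda>\<omega>. fp y \<delta> s m j i b1 b2 t (X t \<omega>)) = expectation (\<lambda>\<omega>. gf y tb (X t \<omega>))"
      unfolding ffe ff_def by simp
    also have "\<dots> \<le> 1" by (rule chernoff) (use y tb Xm[OF that] bnd that E in auto)
    finally show ?thesis .
  qed
  have "prob (Ev M X y \<delta> s m p) \<le> 1 / exp (cst \<delta> s m)"
    unfolding Ev_def p by simp (rule ville[OF ind fp_meas fb fi], auto)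
  thus ?thesis by (simp add: exp_minus field_simps)
qed

lemma fs_bound:
  assumes ind: "indep_vars (\<lambda>_. borel) X {1..}"
    and bnd: "\<And>t \<omega>. t \<ge> 1 \<Longrightarrow> \<omega> \<in> space M \<Longrightarrow> 0 \<le> X t \<omega> \<and> X t \<omega> \<le> 1"
    and E: "\<And>t. t \<ge> 1 \<Longrightarrow> expectation (X t) = y"
    and y: "0 < y" "y < 1" and d: "0 < \<delta>" "\<delta> \<le> 1" and s: "s \<ge> 1"
  shows "prob (Fs M X y \<delta> s m) \<le> \<delta> / (9 * (real s * sqrt (real s))) * (1 / (1 + real m / 2)^2)"
proof -
  have "prob (Fs M X y \<delta> s m) \<le> (\<Sum>p\<in>Pset \<delta> s m. prob (Ev M X y \<delta> s m p))"
    unfolding Fs_def by (rule finite_measure_subadditive_finite) (auto simp: Pset_def ev_sets[OF ind])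
  also have "\<dots> \<le> (\<Sum>p\<in>Pset \<delta> s m. exp (- cst \<delta> s m))"
    by (intro sum_mono ev_bound[OF ind bnd E y])
  also have "\<dots> = 4 * real (Kd \<delta> s m) * (real (Kd \<delta> s m) + 1) * exp (- cst \<delta> s m)"
    unfolding Pset_def by (simp add: card_cartesian_product)
  also have "\<dots> \<le> \<delta> / (9 * (real s * sqrt (real s)) * (1 + real m / 2)^2)"
    using term_bound[OF d s, of m] unfolding cst_def Kd_def Wd_def by simp
  also have "\<dots> = \<delta> / (9 * (real s * sqrt (real s))) * (1 / (1 + real m / 2)^2)" by simp
  finally show ?thesis .
qed

lemma gs_bound:
  assumes ind: "indep_vars (\<lambda>_. borel) X {1..}"
    and bnd: "\<And>t \<omega>. t \<ge> 1 \<Longrightarrow> \<omega> \<in> space M \<Longrightarrow> 0 \<le> X t \<omega> \<and> X t \<omega> \<le> 1"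
    and E: "\<And>t. t \<ge> 1 \<Longrightarrow> expectation (X t) = y"
    and y: "0 < y" "y < 1" and d: "0 < \<delta>" "\<delta> \<le> 1"
  shows "Gs M X y \<delta> s' \<in> sets M"
    "prob (Gs M X y \<delta> s') \<le> \<delta> / 3 * (1 / (real (Suc s') * sqrt (real (Suc s'))))"
proof -
  have Fm: "Fs M X y \<delta> s m \<in> sets M" for s m
    unfolding Fs_def by (intro sets.finite_UN) (auto simp: Pset_def ev_sets[OF ind])
  show "Gs M X y \<delta> s' \<in> sets M" unfolding Gs_def using Fm by auto
  define C where "C = \<delta> / (9 * (real (Suc s') * sqrt (real (Suc s'))))"
  have C0: "C \<ge> 0" unfolding C_def using d by simp
  have fb: "prob (Fs M X y \<delta> (Suc s') m) \<le> C * (1 / (1 + real m / 2)^2)" for m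
    using fs_bound[OF ind bnd E y d, of "Suc s'" m] unfolding C_def by simp
  have sA: "summable (\<lambda>m::nat. 1 / (1 + real m / 2)^2)" "(\<Sum>m. 1 / (1 + real m / 2)^2) \<le> 3"
    using sumA by auto
  have sm: "summable (\<lambda>m. prob (Fs M X y \<delta> (Suc s') m))"
    by (rule summable_comparison_test'[OF summable_mult[OF sA(1), of C], of 0]) (use fb in auto)
  have "prob (Gs M X y \<delta> s') \<le> (\<Sum>m. prob (Fs M X y \<delta> (Suc s') m))"
    unfolding Gs_def by (rule finite_measure_subadditive_countably) (use Fm sm in auto)
  also have "\<dots> \<le> (\<Sum>m. C * (1 / (1 + real m / 2)^2))"
    by (rule suminf_le) (use fb sm summable_mult[OF sA(1), of C] in auto)
  also have "\<dots> = C * (\<Sum>m. 1 / (1 + real m / 2)^2)" using suminf_mult[OF sA(1), of C] by simp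
  also have "\<dots> \<le> C * 3" using sA(2) C0 by (intro mult_left_mono) auto
  also have "\<dots> = \<delta> / 3 * (1 / (real (Suc s') * sqrt (real (Suc s'))))" unfolding C_def by simp
  finally show "prob (Gs M X y \<delta> s') \<le> \<delta> / 3 * (1 / (real (Suc s') * sqrt (real (Suc s'))))" .
qed

lemma union_bound:
  assumes ind: "indep_vars (\<lambda>_. borel) X {1..}"
    and bnd: "\<And>t \<omega>. t \<ge> 1 \<Longrightarrow> \<omega> \<in> space M \<Longrightarrow> 0 \<le> X t \<omega> \<and> X t \<omega> \<le> 1"
    and E: "\<And>t. t \<ge> 1 \<Longrightarrow> expectation (X t) = y"
    and y: "0 < y" "y < 1" and d: "0 < \<delta>" "\<delta> \<le> 1"
  shows "(\<Union>s'. Gs M X y \<delta> s') \<in> sets M" "prob (\<Union>s'. Gs M X y \<delta> s') \<le> \<delta>"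
proof -
  note g = gs_bound[OF ind bnd E y d]
  show "(\<Union>s'. Gs M X y \<delta> s') \<in> sets M" using g by auto
  have sB: "summable (\<lambda>s::nat. 1 / (real (Suc s) * sqrt (real (Suc s))))" "(\<Sum>s. 1 / (real (Suc s) * sqrt (real (Suc s)))) \<le> 3"
    using sumB by auto
  have sm: "summable (\<lambda>s'. prob (Gs M X y \<delta> s'))"
    by (rule summable_comparison_test'[OF summable_mult[OF sB(1), of "\<delta>/3"], of 0]) (use g in auto)
  have "prob (\<Union>s'. Gs M X y \<delta> s') \<le> (\<Sum>s'. prob (Gs M X y \<delta> s'))"
    by (rule finite_measure_subadditive_countably) (use g sm in auto)
  also have "\<dots> \<le> (\<Sum>s'. \<delta> / 3 * (1 / (real (Suc s') * sqrt (real (Suc s')))))"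
    by (rule suminf_le) (use g sm summable_mult[OF sB(1), of "\<delta>/3"] in auto)
  also have "\<dots> = \<delta> / 3 * (\<Sum>s'. 1 / (real (Suc s') * sqrt (real (Suc s'))))"
    using suminf_mult[OF sB(1), of "\<delta>/3"] by simp
  also have "\<dots> \<le> \<delta> / 3 * 3" using sB(2) d by (intro mult_left_mono) auto
  finally show "prob (\<Union>s'. Gs M X y \<delta> s') \<le> \<delta>" by simp
qed

end

theorem lemma2:
  fixes M :: "'a measure" and X :: "nat \<Rightarrow> 'a \<Rightarrow> real" and \<mu>\<^sub>0 \<delta> :: real
  assumes "prob_space M"
    and "prob_space.indep_vars M (\<lambda>_. borel) X {1..}"
    and "\<And>t \<omega>. t \<ge> 1 \<Longrightarrow> \<omega> \<in> space M \<Longrightarrow> 0 \<le> X t \<omega> \<and> X t \<omega> \<le> 1"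
    and "0 \<le> \<mu>\<^sub>0" and "\<mu>\<^sub>0 \<le> 1"
    and "\<And>t. t \<ge> 1 \<Longrightarrow> prob_space.expectation M (X t) = \<mu>\<^sub>0"
    and "\<delta> > 0"
  shows "measure M {\<omega> \<in> space M. glr_tau X \<delta> \<omega> < \<infinity>} \<le> \<delta>"
proof -
  interpret P: prob_space M by fact
  note ind = assms(2) and bnd = assms(3) and E = assms(6)
  define bad where "bad = {\<omega> \<in> space M. glr_tau X \<delta> \<omega> < \<infinity>}"
  show ?thesis
  proof (cases "\<delta> \<ge> 1")
    case True
    thus ?thesis using P.prob_le_1[of "{\<omega> \<in> space M. glr_tau X \<delta> \<omega> < \<infinity>}"] by linarith
  next
    case False
    hence d: "0 < \<delta>" "\<delta> \<le> 1" using assms(7) by auto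
    have bad_witness: "\<exists>n\<ge>2. Bn \<delta> (real n) \<le> glr_stat X n \<omega>" if w0: "\<omega> \<in> bad" for \<omega>
    proof -
      have "glr_tau X \<delta> \<omega> < \<infinity>" using w0 unfolding bad_def by simp
      from glr_unfold[OF this] obtain n where n: "n \<ge> 2" "beta_thr n \<delta> \<le> glr_stat X n \<omega>" by blast
      have "Bn \<delta> (real n) \<le> beta_thr n \<delta>" using beta_ge[of \<delta> n] d n by simp
      thus ?thesis using n by (intro exI[of _ n]) auto
    qed
    consider "\<mu>\<^sub>0 = 0 \<or> \<mu>\<^sub>0 = 1" | "0 < \<mu>\<^sub>0 \<and> \<mu>\<^sub>0 < 1" using assms(4,5) by linarith
    thus ?thesis
    proof cases
      case 1
      have ae1: "AE \<omega> in M. 1 \<le> t \<longrightarrow> X t \<omega> = \<mu>\<^sub>0" for t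
      proof (cases "t \<ge> 1")
        case True
        have Xm: "X t \<in> borel_measurable M" using ind True unfolding P.indep_vars_def by auto
        have iX: "integrable M (X t)" by (rule P.integrable_const_bound[where B=1]) (use bnd True Xm in auto)
        show ?thesis
        proof (cases "\<mu>\<^sub>0 = 0")
          case True
          have "AE \<omega> in M. X t \<omega> = 0"
            using integral_nonneg_eq_0_iff_AE[of M "X t"] iX bnd \<open>t \<ge> 1\<close> E[of t] True by auto
          thus ?thesis using True by auto
        next
          case False
          hence m1: "\<mu>\<^sub>0 = 1" using 1 by simp
          have i1: "integrable M (\<lambda>\<omega>. 1 - X t \<omega>)" using iX by simp
          have "P.expectation (\<lambda>\<omega>. 1 - X t \<omega>) = 0" using iX E[of t] \<open>t \<ge> 1\<close> m1 by (simp add: P.prob_space)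
          hence "AE \<omega> in M. 1 - X t \<omega> = 0"
            using integral_nonneg_eq_0_iff_AE[of M "\<lambda>\<omega>. 1 - X t \<omega>"] i1 bnd \<open>t \<ge> 1\<close> by auto
          thus ?thesis using m1 by auto
        qed
      qed simp
      hence "AE \<omega> in M. \<forall>t. 1 \<le> t \<longrightarrow> X t \<omega> = \<mu>\<^sub>0" by (simp add: AE_all_countable)
      then obtain N where N: "{\<omega> \<in> space M. \<not> (\<forall>t. 1 \<le> t \<longrightarrow> X t \<omega> = \<mu>\<^sub>0)} \<subseteq> N" "N \<in> null_sets M"
        by (rule AE_E) (auto simp: null_sets_def)
      have "bad \<subseteq> N"
      proof
        fix \<omega> assume w: "\<omega> \<in> bad"
        show "\<omega> \<in> N"
        proof (rule ccontr)
          assume "\<omega> \<notin> N"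
          hence c: "\<And>t. 1 \<le> t \<Longrightarrow> X t \<omega> = \<mu>\<^sub>0" using N(1) w unfolding bad_def by auto
          obtain n where n: "n \<ge> 2" "Bn \<delta> (real n) \<le> glr_stat X n \<omega>" using bad_witness[OF w] by blast
          have "glr_stat X n \<omega> = 0" using glr_const[of X \<omega> \<mu>\<^sub>0 n] c assms(4,5) n by simp
          moreover have "Bn \<delta> (real n) \<ge> 9" using Bn_ge[of \<delta> "real n"] d n by simp
          ultimately show False using n by simp
        qed
      qed
      hence "measure M bad \<le> measure M N" using N by (intro P.finite_measure_mono) auto
      also have "\<dots> = 0" using N by (simp add: measure_def null_sets_def)
      finally show ?thesis unfolding bad_def using d by simp
    next
      case 2
      hence y: "0 < \<mu>\<^sub>0" "\<mu>\<^sub>0 < 1" by auto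
      have "bad \<subseteq> (\<Union>s'. Gs M X \<mu>\<^sub>0 \<delta> s')"
      proof
        fix \<omega> assume w: "\<omega> \<in> bad"
        hence ws: "\<omega> \<in> space M" unfolding bad_def by auto
        obtain n where n: "n \<ge> 2" "Bn \<delta> (real n) \<le> glr_stat X n \<omega>" using bad_witness[OF w] by blast
        obtain s where s: "s \<in> {1..<n}" and st: "Bn \<delta> (real n) \<le> real s * kl (emp_mean X 1 s \<omega>) (emp_mean X 1 n \<omega>)
          + real (n - s) * kl (emp_mean X (s+1) n \<omega>) (emp_mean X 1 n \<omega>)"
          using glr_max[OF n(1) n(2)] by blast
        have s1: "1 \<le> s" "s < n" using s by auto
        define a where "a = emp_mean X 1 s \<omega>"
        define b where "b = emp_mean X (s+1) n \<omega>"
        have ea: "a = (\<Sum>t\<in>{1..s}. X t \<omega>) / real s" unfolding a_def using emp_split[OF s1] by simp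
        have eb: "b = (\<Sum>t\<in>{s+1..n}. X t \<omega>) / real (n - s)" unfolding b_def using emp_split[OF s1] by simp
        have em: "emp_mean X 1 n \<omega> = (real s * a + real (n - s) * b) / (real s + real (n - s))"
          unfolding a_def b_def using emp_split[OF s1] by simp
        have a01: "0 \<le> a" "a \<le> 1"
        proof -
          have "(\<Sum>t\<in>{1..s}. X t \<omega>) \<le> (\<Sum>t\<in>{1..s}. 1)" using bnd ws by (intro sum_mono) auto
          moreover have "(\<Sum>t\<in>{1..s}. X t \<omega>) \<ge> 0" using bnd ws by (intro sum_nonneg) auto
          ultimately show "0 \<le> a" "a \<le> 1" unfolding ea using s1 by auto
        qed
        have b01: "0 \<le> b" "b \<le> 1"
        proof -
          have "(\<Sum>t\<in>{s+1..n}. X t \<omega>) \<le> (\<Sum>t\<in>{s+1..n}. 1)" using bnd ws by (intro sum_mono) auto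
          moreover have "(\<Sum>t\<in>{s+1..n}. X t \<omega>) \<ge> 0" using bnd ws by (intro sum_nonneg) auto
          ultimately show "0 \<le> b" "b \<le> 1" unfolding eb using s1 by auto
        qed
        have "Bn \<delta> (real n) \<le> real s * kl a \<mu>\<^sub>0 + real (n - s) * kl b \<mu>\<^sub>0"
          using st pyth[of "real s" "real (n - s)" a b \<mu>\<^sub>0] s1 a01 b01 y unfolding em a_def[symmetric] b_def[symmetric]
          by simp
        hence G: "real s * kl ((\<Sum>t\<in>{1..s}. X t \<omega>) / real s) \<mu>\<^sub>0
          + real (n - s) * kl ((\<Sum>t\<in>{s+1..n}. X t \<omega>) / real (n - s)) \<mu>\<^sub>0 \<ge> Bn \<delta> (real n)"
          unfolding ea eb .
        obtain m j i b1 b2 where mj: "j < Kd \<delta> s m" "i \<le> Kd \<delta> s m"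
          "cr (fp \<mu>\<^sub>0 \<delta> s m j i b1 b2) (exp (cst \<delta> s m)) (\<lambda>t. X t \<omega>) (s + 2^Suc m)"
          using det_core[of \<mu>\<^sub>0 \<delta> "\<lambda>t. X t \<omega>" s n, OF y d _ s1 G] bnd ws by blast
        have "\<omega> \<in> Ev M X \<mu>\<^sub>0 \<delta> s m (j, i, b1, b2)" unfolding Ev_def using mj ws by simp
        moreover have "(j, i, b1, b2) \<in> Pset \<delta> s m" unfolding Pset_def using mj by simp
        ultimately have "\<omega> \<in> Fs M X \<mu>\<^sub>0 \<delta> s m" unfolding Fs_def by blast
        moreover have "s = Suc (s - 1)" using s1 by simp
        ultimately have "\<omega> \<in> Gs M X \<mu>\<^sub>0 \<delta> (s - 1)" unfolding Gs_def by (metis UN_I UNIV_I)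
        thus "\<omega> \<in> (\<Union>s'. Gs M X \<mu>\<^sub>0 \<delta> s')" by blast
      qed
      moreover note ub = P.union_bound[OF ind bnd E y d]
      ultimately have "measure M bad \<le> measure M (\<Union>s'. Gs M X \<mu>\<^sub>0 \<delta> s')"
        by (intro P.finite_measure_mono) auto
      also have "\<dots> \<le> \<delta>" using ub by simp
      finally show ?thesis unfolding bad_def .
    qed
  qed
qed

end
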